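(* Let $n,k\ge1$ be integers, $D=\{(x,y)\in\mathbb{R}^n\times\mathbb{R}:\|x\|\le1,|y|\le1\}$, $D_0=\{(x,0)\in D\}$, $D^*=D\setminus D_0$, and let $T=(F,G):D^*\to D$ satisfy condition (L1) of the context. Then there exist a neighborhood $U$ of $D_0$ and a constant $c>0$ such that $\|D^kT(a,b)\|\le c\,|b|^{\alpha-k}$ for all $(a,b)\in U\cap D^*$.
   Context: $\|\cdot\|$ is a norm on $\mathbb{R}^n$, with the induced norms on multilinear maps. Condition (L1): in a neighborhood of $D_0$, $F(x,y)=x_\pm^*+|y|^\alpha[B_\pm^*+\varphi_\pm(x,y)]$ and $G(x,y)=y_\pm^*+|y|^\alpha[A_\pm^*+\psi_\pm(x,y)]$, with sign $+$ for $y>0$ and $-$ for $y<0$, where $x_\pm^*,B_\pm^*\in\mathbb{R}^n$, $y_\pm^*\in\mathbb{R}$, $A_\pm^*$ are nonzero real constants, $\alpha>0$, and $\varphi_\pm,\psi_\pm$ are of class $C^{k+1}$ with derivatives uniformly bounded with respect to $x$ and satisfying $\|\partial^{l+m}\varphi_\pm/\partial x^l\partial y^m(x,y)\|\le K|y|^{\gamma-m}$, $\|\partial^{l+m}\psi_\pm/\partial x^l\partial y^m(x,y)\|\le K|y|^{\gamma-m}$ for all $l,m\in\{0,\dots,k+1\}$ with $l+m\le k+1$, where $K>0$ and $\gamma>k-1$ are constants. *)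

theory Defs
  imports "HOL-Analysis.Analysis"
begin

definition is_norm :: "('a::real_vector \<Rightarrow> real) \<Rightarrow> bool" where
  "is_norm N \<longleftrightarrow> (\<forall>x. 0 \<le> N x) \<and> (\<forall>x. N x = 0 \<longrightarrow> x = 0)
     \<and> (\<forall>c x. N (c *\<^sub>R x) = \<bar>c\<bar> * N x) \<and> (\<forall>x y. N (x + y) \<le> N x + N y)"

definition prod_norm :: "('a \<Rightarrow> real) \<Rightarrow> 'a \<times> real \<Rightarrow> real" where
  "prod_norm N p = max (N (fst p)) \<bar>snd p\<bar>"

text \<open>Iterated Frechet derivative relative to a set S.
  hderiv S j f p [h1,...,hj] = D^j f(p)(h1,...,hj); the head direction is the
  outermost differentiation.\<close>
fun hderiv :: "'v::real_normed_vector set \<Rightarrow> nat \<Rightarrow> ('v \<Rightarrow> 'w::real_normed_vector)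
                 \<Rightarrow> 'v \<Rightarrow> 'v list \<Rightarrow> 'w" where
  "hderiv S 0 f p hs = f p"
| "hderiv S (Suc j) f p hs =
     frechet_derivative (\<lambda>q. hderiv S j f q (tl hs)) (at p within S) (hd hs)"

definition Ck_on :: "nat \<Rightarrow> ('v::real_normed_vector \<Rightarrow> 'w::real_normed_vector) \<Rightarrow> 'v set \<Rightarrow> bool" where
  "Ck_on m f S \<longleftrightarrow>
     (\<forall>j<m. \<forall>hs. length hs = j \<longrightarrow>
        (\<forall>p\<in>S. (\<lambda>q. hderiv S j f q hs) differentiable (at p within S))) \<and>
     (\<forall>hs. length hs = m \<longrightarrow> continuous_on S (\<lambda>q. hderiv S m f q hs))"

definition DD :: "('a \<Rightarrow> real) \<Rightarrow> ('a \<times> real) set" where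
  "DD N = {(x, y). N x \<le> 1 \<and> \<bar>y\<bar> \<le> 1}"

definition DD0 :: "('a \<Rightarrow> real) \<Rightarrow> ('a \<times> real) set" where
  "DD0 N = {(x, y). N x \<le> 1 \<and> y = 0}"

definition DDstar :: "('a \<Rightarrow> real) \<Rightarrow> ('a \<times> real) set" where
  "DDstar N = DD N - DD0 N"

end

theory Submission
  imports Defs
begin

definition approach :: "'v::real_normed_vector set \<Rightarrow> bool" where
  "approach S \<longleftrightarrow> (\<forall>q\<in>S. \<exists>w r \<delta>. r > 0 \<and> \<delta> > 0 \<and>
      (\<forall>v t. norm v < r \<longrightarrow> 0 < t \<longrightarrow> t \<le> \<delta> \<longrightarrow> q + t *\<^sub>R (w + v) \<in> S))"

lemma zero_deriv_approach:
  fixes L :: "'v::real_normed_vector \<Rightarrow> 'w::real_normed_vector"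
  assumes ap: "approach S" and q: "q \<in> S"
    and d: "((\<lambda>y. 0::'w) has_derivative L) (at q within S)"
  shows "L = (\<lambda>h. 0)"
proof -
  have bl: "bounded_linear L" using d by (simp add: has_derivative_within')
  then interpret L: bounded_linear L .
  obtain w r \<delta> where r: "r > 0" and \<delta>: "\<delta> > 0"
    and W: "\<And>v t. norm v < r \<Longrightarrow> 0 < t \<Longrightarrow> t \<le> \<delta> \<Longrightarrow> q + t *\<^sub>R (w + v) \<in> S"
    using ap q unfolding approach_def by blast
  have dd: "\<forall>e>0. \<exists>d>0. \<forall>x'\<in>S. 0 < norm (x' - q) \<and> norm (x' - q) < d \<longrightarrow>
                 norm (0 - 0 - L (x' - q)) / norm (x' - q) < e"
    using d unfolding has_derivative_within' by blast
  have key: "L (w + v) = 0" if v: "norm v < r" for v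
  proof (cases "w + v = 0")
    case True then show ?thesis by simp
  next
    case False
    let ?u = "w + v"
    have nu: "norm ?u > 0" using False by simp
    have "norm (L ?u) \<le> e * norm ?u" if e: "e > 0" for e
    proof -
      obtain d where d0: "d > 0" and dP: "\<forall>x'\<in>S. 0 < norm (x' - q) \<and> norm (x' - q) < d \<longrightarrow>
                 norm (0 - 0 - L (x' - q)) / norm (x' - q) < e"
        using dd e by blast
      define t where "t = min \<delta> (d / (2 * norm ?u))"
      have t0: "t > 0" using \<delta> d0 nu by (simp add: t_def)
      have tle: "t \<le> \<delta>" by (simp add: t_def)
      have "t * norm ?u \<le> d / 2"
      proof -
        have "t \<le> d / (2 * norm ?u)" by (simp add: t_def)
        then have "t * (2 * norm ?u) \<le> d" using nu by (simp add: pos_le_divide_eq)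
        then show ?thesis by simp
      qed
      then have tl: "t * norm ?u < d" using d0 by simp
      have inS: "q + t *\<^sub>R ?u \<in> S" using W[OF v t0 tle] .
      have "norm (0 - 0 - L (t *\<^sub>R ?u)) / norm (t *\<^sub>R ?u) < e"
        using dP inS t0 nu tl by auto
      then have "t * norm (L ?u) / (t * norm ?u) < e"
        using t0 by (simp add: L.scaleR)
      then have "norm (L ?u) / norm ?u < e" using t0 by simp
      then show ?thesis using nu by (simp add: divide_less_eq less_imp_le)
    qed
    then have "norm (L ?u) \<le> 0"
    proof -
      assume H: "\<And>e. e > 0 \<Longrightarrow> norm (L ?u) \<le> e * norm ?u"
      show ?thesis
      proof (rule ccontr)
        assume "\<not> norm (L ?u) \<le> 0"
        then have pos: "norm (L ?u) > 0" by simp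
        have "norm (L ?u) \<le> (norm (L ?u) / (2 * norm ?u)) * norm ?u"
          using H[of "norm (L ?u) / (2 * norm ?u)"] pos nu by simp
        also have "\<dots> = norm (L ?u) / 2" using nu by simp
        finally show False using pos by simp
      qed
    qed
    then show ?thesis by simp
  qed
  have Lw: "L w = 0" using key[of 0] r by simp
  show ?thesis
  proof
    fix h
    show "L h = 0"
    proof (cases "h = 0")
      case True then show ?thesis by (simp add: L.zero)
    next
      case False
      define c where "c = r / (2 * norm h)"
      have c0: "c > 0" using r False by (simp add: c_def)
      have "norm (c *\<^sub>R h) < r" using r False by (simp add: c_def)
      then have "L (w + c *\<^sub>R h) = 0" by (rule key)
      then have "c *\<^sub>R L h = 0" using Lw by (simp add: L.add L.scaleR)
      then show ?thesis using c0 by simp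
    qed
  qed
qed

lemma deriv_unique_approach:
  fixes f :: "'v::real_normed_vector \<Rightarrow> 'w::real_normed_vector"
  assumes ap: "approach S" and q: "q \<in> S"
    and d1: "(f has_derivative f1) (at q within S)"
    and d2: "(f has_derivative f2) (at q within S)"
  shows "f1 = f2"
proof -
  have "((\<lambda>y. f y - f y) has_derivative (\<lambda>h. f1 h - f2 h)) (at q within S)"
    using has_derivative_diff[OF d1 d2] .
  then have "((\<lambda>y. 0::'w) has_derivative (\<lambda>h. f1 h - f2 h)) (at q within S)" by simp
  from zero_deriv_approach[OF ap q this] have "\<And>h. f1 h - f2 h = 0" by metis
  then show ?thesis by (auto simp: fun_eq_iff)
qed

lemma fd_eq:
  fixes f :: "'v::real_normed_vector \<Rightarrow> 'w::real_normed_vector"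
  assumes "approach S" "q \<in> S" "(f has_derivative D) (at q within S)"
  shows "frechet_derivative f (at q within S) = D"
proof -
  have "f differentiable (at q within S)" using assms(3) by (auto simp: differentiable_def)
  then have "(f has_derivative frechet_derivative f (at q within S)) (at q within S)"
    by (simp add: frechet_derivative_works)
  then show ?thesis using deriv_unique_approach assms by blast
qed

lemma hderiv_append:
  "hderiv S (length xs + length ys) f p (xs @ ys) =
   hderiv S (length xs) (\<lambda>q. hderiv S (length ys) f q ys) p xs"
proof (induction xs arbitrary: p)
  case Nil then show ?case by simp
next
  case (Cons x xs)
  have "(\<lambda>q. hderiv S (length xs + length ys) f q (xs @ ys)) =
        (\<lambda>q. hderiv S (length xs) (\<lambda>q. hderiv S (length ys) f q ys) q xs)"
    using Cons by auto
  then show ?case by simp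
qed

lemma has_derivative_cong_on:
  assumes "\<forall>q\<in>S. g q = g' q" "p \<in> S"
  shows "(g has_derivative D) (at p within S) \<longleftrightarrow> (g' has_derivative D) (at p within S)"
  using assms has_derivative_transform by metis

lemma fd_cong_on:
  assumes "\<forall>q\<in>S. g q = g' q" "p \<in> S"
  shows "frechet_derivative g (at p within S) = frechet_derivative g' (at p within S)"
proof -
  have "(\<lambda>D. (g has_derivative D) (at p within S)) = (\<lambda>D. (g' has_derivative D) (at p within S))"
    using has_derivative_cong_on[OF assms] by auto
  then show ?thesis unfolding frechet_derivative_def by simp
qed

lemma differentiable_cong_on:
  assumes "\<forall>q\<in>S. g q = g' q" "p \<in> S"
  shows "g differentiable (at p within S) \<longleftrightarrow> g' differentiable (at p within S)"
  unfolding differentiable_def using has_derivative_cong_on[OF assms] by auto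

lemma hderiv_cong_on:
  assumes "\<forall>q\<in>S. f q = f' q"
  shows "p \<in> S \<Longrightarrow> hderiv S j f p hs = hderiv S j f' p hs"
proof (induction j arbitrary: p hs)
  case 0 then show ?case using assms by simp
next
  case (Suc j)
  have "\<forall>q\<in>S. hderiv S j f q (tl hs) = hderiv S j f' q (tl hs)" using Suc.IH by blast
  from fd_cong_on[OF this Suc.prems] show ?case by simp
qed

lemma hderiv_local:
  assumes W: "open W" and SW: "S \<inter> W = S' \<inter> W" and ff: "\<forall>q\<in>S \<inter> W. f q = f' q"
  shows "p \<in> S \<inter> W \<Longrightarrow> hderiv S j f p hs = hderiv S' j f' p hs"
proof (induction j arbitrary: p hs)
  case 0 then show ?case using ff by simp
next
  case (Suc j)
  have agree: "\<forall>q\<in>S \<inter> W. hderiv S j f q (tl hs) = hderiv S' j f' q (tl hs)" using Suc.IH by blast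
  have a1: "at p within S = at p within (S \<inter> W)"
    using Suc.prems W by (intro at_within_nhd[of p W]) auto
  have a2: "at p within S' = at p within (S \<inter> W)"
    using Suc.prems W SW by (intro at_within_nhd[of p W]) auto
  show ?case
    using fd_cong_on[OF agree Suc.prems] by (simp add: a1 a2)
qed

lemma differentiable_local:
  assumes W: "open W" and SW: "S \<inter> W = S' \<inter> W" and ff: "\<forall>q\<in>S \<inter> W. f q = f' q"
    and p: "p \<in> S \<inter> W"
  shows "f differentiable (at p within S) \<longleftrightarrow> f' differentiable (at p within S')"
proof -
  have a1: "at p within S = at p within (S \<inter> W)"
    using p W by (intro at_within_nhd[of p W]) auto
  have a2: "at p within S' = at p within (S \<inter> W)"
    using p W SW by (intro at_within_nhd[of p W]) auto
  show ?thesis using differentiable_cong_on[OF ff p] by (simp add: a1 a2)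
qed

definition smooth :: "nat \<Rightarrow> ('v::real_normed_vector \<Rightarrow> 'w::real_normed_vector) \<Rightarrow> 'v set \<Rightarrow> bool" where
  "smooth n f S \<longleftrightarrow> (\<forall>j<n. \<forall>hs. length hs = j \<longrightarrow>
      (\<forall>p\<in>S. (\<lambda>q. hderiv S j f q hs) differentiable (at p within S)))"

lemma Ck_on_smooth: "Ck_on m f S \<Longrightarrow> smooth m f S"
  unfolding Ck_on_def smooth_def by blast

lemma smooth_mono: "smooth n f S \<Longrightarrow> m \<le> n \<Longrightarrow> smooth m f S"
  unfolding smooth_def by auto

lemma smoothD: "smooth n f S \<Longrightarrow> j < n \<Longrightarrow> length hs = j \<Longrightarrow> p \<in> S \<Longrightarrow>
   (\<lambda>q. hderiv S j f q hs) differentiable (at p within S)"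
  unfolding smooth_def by blast

lemma hderiv_Suc_Cons: "hderiv S (Suc n) f p (u # hs) =
    frechet_derivative (\<lambda>q. hderiv S n f q hs) (at p within S) u"
  by simp

lemma hderiv_lin_slot:
  fixes f :: "'v::real_normed_vector \<Rightarrow> 'w::real_normed_vector"
  assumes ap: "approach S"
  shows "smooth n f S \<Longrightarrow> length hs = n \<Longrightarrow> i < n \<Longrightarrow> p \<in> S \<Longrightarrow>
     hderiv S n f p (hs[i := a + c *\<^sub>R b]) =
       hderiv S n f p (hs[i := a]) + c *\<^sub>R hderiv S n f p (hs[i := b])"
proof (induction n arbitrary: hs i p)
  case 0 then show ?case by simp
next
  case (Suc n)
  obtain u hs' where hs: "hs = u # hs'" using Suc.prems(2) by (cases hs) auto
  have lhs': "length hs' = n" using Suc.prems(2) hs by simp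
  have sm: "smooth n f S" using Suc.prems(1) smooth_mono by fastforce
  show ?case
  proof (cases i)
    case 0
    have "(\<lambda>q. hderiv S n f q hs') differentiable (at p within S)"
      using smoothD[OF Suc.prems(1) _ lhs' Suc.prems(4)] by simp
    then have "linear (frechet_derivative (\<lambda>q. hderiv S n f q hs') (at p within S))"
      by (rule linear_frechet_derivative)
    then show ?thesis using 0 hs by (simp add: linear_add linear_scale)
  next
    case (Suc i')
    have i': "i' < n" using Suc.prems(3) Suc by simp
    let ?ga = "\<lambda>q. hderiv S n f q (hs'[i' := a])"
    let ?gb = "\<lambda>q. hderiv S n f q (hs'[i' := b])"
    have eq: "\<forall>q\<in>S. hderiv S n f q (hs'[i' := a + c *\<^sub>R b]) = ?ga q + c *\<^sub>R ?gb q"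
      using Suc.IH[OF sm lhs' i'] by blast
    have da: "?ga differentiable (at p within S)"
      using smoothD[OF Suc.prems(1), of n "hs'[i' := a]"] lhs' Suc.prems(4) by simp
    have db: "?gb differentiable (at p within S)"
      using smoothD[OF Suc.prems(1), of n "hs'[i' := b]"] lhs' Suc.prems(4) by simp
    have D: "((\<lambda>q. ?ga q + c *\<^sub>R ?gb q) has_derivative
          (\<lambda>h. frechet_derivative ?ga (at p within S) h + c *\<^sub>R frechet_derivative ?gb (at p within S) h))
          (at p within S)"
      using da db by (intro derivative_eq_intros) (auto simp: frechet_derivative_works)
    have "frechet_derivative (\<lambda>q. hderiv S n f q (hs'[i' := a + c *\<^sub>R b])) (at p within S) =
          frechet_derivative (\<lambda>q. ?ga q + c *\<^sub>R ?gb q) (at p within S)"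
      using fd_cong_on[OF eq Suc.prems(4)] .
    also have "\<dots> = (\<lambda>h. frechet_derivative ?ga (at p within S) h + c *\<^sub>R frechet_derivative ?gb (at p within S) h)"
      using fd_eq[OF ap Suc.prems(4) D] .
    finally show ?thesis using hs Suc by simp
  qed
qed

lemma hderiv_zero_slot:
  fixes f :: "'v::real_normed_vector \<Rightarrow> 'w::real_normed_vector"
  assumes "approach S" "smooth n f S" "length hs = n" "i < n" "p \<in> S"
  shows "hderiv S n f p (hs[i := 0]) = 0"
  using hderiv_lin_slot[OF assms(1-5), of 0 1 0] by simp

lemma hderiv_add_slot:
  fixes f :: "'v::real_normed_vector \<Rightarrow> 'w::real_normed_vector"
  assumes "approach S" "smooth n f S" "length hs = n" "i < n" "p \<in> S"
  shows "hderiv S n f p (hs[i := a + b]) = hderiv S n f p (hs[i := a]) + hderiv S n f p (hs[i := b])"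
  using hderiv_lin_slot[OF assms(1-5), of a 1 b] by simp

lemma hderiv_scale_slot:
  fixes f :: "'v::real_normed_vector \<Rightarrow> 'w::real_normed_vector"
  assumes "approach S" "smooth n f S" "length hs = n" "i < n" "p \<in> S"
  shows "hderiv S n f p (hs[i := c *\<^sub>R b]) = c *\<^sub>R hderiv S n f p (hs[i := b])"
  using hderiv_lin_slot[OF assms(1-5), of 0 c b] hderiv_zero_slot[OF assms] by simp

lemma schwarz_aux:
  fixes g :: "'v::real_normed_vector \<Rightarrow> 'w::real_normed_vector"
  assumes r: "r > 0" and dg: "\<forall>x\<in>ball q r. g differentiable (at x)"
    and dH: "((\<lambda>x. frechet_derivative g (at x) u) has_derivative L) (at q)"
    and e: "e > 0"
  shows "\<exists>s0>0. \<forall>s. 0 < s \<and> s \<le> s0 \<longrightarrow>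
     norm ((g (q + s *\<^sub>R u + s *\<^sub>R v) - g (q + s *\<^sub>R u) - g (q + s *\<^sub>R v) + g q) - (s * s) *\<^sub>R L v)
       \<le> e * (s * s) * (2 * norm u + 3 * norm v)"
proof -
  let ?H = "\<lambda>x. frechet_derivative g (at x) u"
  have bl: "bounded_linear L" using dH by (simp add: has_derivative_at_alt)
  interpret L: bounded_linear L by (rule bl)
  obtain \<delta> where \<delta>: "\<delta> > 0" and HD: "\<And>y. norm (y - q) < \<delta> \<Longrightarrow>
        norm (?H y - ?H q - L (y - q)) \<le> e * norm (y - q)"
    using dH e unfolding has_derivative_at_alt by blast
  define X where "X = norm u + norm v + 1"
  have nuv: "X > 0" unfolding X_def by (smt (verit) norm_ge_zero)
  define s0 where "s0 = min \<delta> r / (2 * X)"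
  have s00: "s0 > 0" unfolding s0_def using \<delta> r nuv by simp
  have s0b: "s0 * (norm u + norm v) < min \<delta> r"
  proof -
    have "s0 * (norm u + norm v) \<le> s0 * X" using s00 unfolding X_def by simp
    also have "\<dots> = min \<delta> r / 2" unfolding s0_def using nuv by (simp add: field_simps)
    also have "\<dots> < min \<delta> r" using \<delta> r by (simp add: min_def)
    finally show ?thesis .
  qed
  have R: "norm (?H (q + w) - ?H q - L w) \<le> e * norm w" if "norm w < \<delta>" for w
    using HD[of "q + w"] that by simp
  show ?thesis
  proof (intro exI[of _ s0] conjI allI impI)
    show "s0 > 0" by (rule s00)
    fix s assume s: "0 < s \<and> s \<le> s0"
    have "s * (norm u + norm v) \<le> s0 * (norm u + norm v)" using s by (intro mult_right_mono) auto
    then have ss: "s * (norm u + norm v) < min \<delta> r" using s0b by linarith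
    have small: "norm (t *\<^sub>R u + s' *\<^sub>R v) < min \<delta> r"
      if "0 \<le> t" "t \<le> s" "0 \<le> s'" "s' \<le> s" for t s'
    proof -
      have "norm (t *\<^sub>R u + s' *\<^sub>R v) \<le> norm (t *\<^sub>R u) + norm (s' *\<^sub>R v)"
        by (rule norm_triangle_ineq)
      also have "\<dots> = t * norm u + s' * norm v" using that by simp
      finally have "norm (t *\<^sub>R u + s' *\<^sub>R v) \<le> t * norm u + s' * norm v" .
      also have "\<dots> \<le> s * norm u + s * norm v"
        using that by (intro add_mono mult_right_mono) auto
      finally show ?thesis using ss by (simp add: distrib_left)
    qed
    define \<phi> where "\<phi> t = g (q + t *\<^sub>R u + s *\<^sub>R v) - g (q + t *\<^sub>R u)" for t
    define \<phi>' where "\<phi>' t = ?H (q + t *\<^sub>R u + s *\<^sub>R v) - ?H (q + t *\<^sub>R u)" for t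
    have gd: "(g has_derivative frechet_derivative g (at x)) (at x)" if "norm (x - q) < r" for x
      using dg that by (simp add: frechet_derivative_works dist_norm norm_minus_commute)
    have chain: "((\<lambda>t. g (q + t *\<^sub>R u + c)) has_vector_derivative ?H (q + t *\<^sub>R u + c)) (at t within T)"
      if "norm (t *\<^sub>R u + c) < r" for t c T
    proof -
      let ?x = "q + t *\<^sub>R u + c"
      have g1: "(g has_derivative frechet_derivative g (at ?x)) (at ?x)"
        using gd[of ?x] that by (simp add: add.assoc)
      have lin: "linear (frechet_derivative g (at ?x))"
        using g1 has_derivative_linear by blast
      have a: "((\<lambda>t. q + t *\<^sub>R u + c) has_derivative (\<lambda>d. d *\<^sub>R u)) (at t within T)"
        by (intro derivative_eq_intros) auto
      have "((\<lambda>t. g (q + t *\<^sub>R u + c)) has_derivative (\<lambda>d. frechet_derivative g (at ?x) (d *\<^sub>R u))) (at t within T)"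
        by (rule has_derivative_in_compose[OF a has_derivative_at_withinI[OF g1]])
      then show ?thesis unfolding has_vector_derivative_def
        by (simp add: linear_scale[OF lin])
    qed
    have dphi: "(\<phi> has_vector_derivative \<phi>' t) (at t within {0..s})" if "t \<in> {0..s}" for t
    proof -
      have t: "0 \<le> t" "t \<le> s" using that by auto
      have n1: "norm (t *\<^sub>R u + s *\<^sub>R v) < r" using small[OF t] s by auto
      have n2: "norm (t *\<^sub>R u + 0) < r" using small[OF t, of 0] s by auto
      have "((\<lambda>t. g (q + t *\<^sub>R u + s *\<^sub>R v) - g (q + t *\<^sub>R u + 0)) has_vector_derivative
             (?H (q + t *\<^sub>R u + s *\<^sub>R v) - ?H (q + t *\<^sub>R u + 0))) (at t within {0..s})"
        by (intro has_vector_derivative_diff chain n1 n2)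
      then show ?thesis unfolding \<phi>_def \<phi>'_def by simp
    qed
    define B where "B = e * (2 * s * norm u + 2 * s * norm v)"
    have bnd: "norm (\<phi>' t - \<phi>' 0) \<le> B" if "t \<in> {0..s}" for t
    proof -
      have t: "0 \<le> t" "t \<le> s" using that by auto
      have n1: "norm (t *\<^sub>R u + s *\<^sub>R v) < \<delta>" using small[OF t] s by auto
      have n2: "norm (t *\<^sub>R u) < \<delta>" using small[OF t, of 0] s by auto
      have n3: "norm (s *\<^sub>R v) < \<delta>" using small[of 0 s] s by auto
      have eq: "\<phi>' t - \<phi>' 0 = (?H (q + (t *\<^sub>R u + s *\<^sub>R v)) - ?H q - L (t *\<^sub>R u + s *\<^sub>R v))
            - (?H (q + t *\<^sub>R u) - ?H q - L (t *\<^sub>R u)) - (?H (q + s *\<^sub>R v) - ?H q - L (s *\<^sub>R v))"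
        unfolding \<phi>'_def by (simp add: L.add algebra_simps)
      have tri: "norm (A - B - C) \<le> norm A + norm B + norm C" for A B C :: 'w
        by (metis add_mono norm_triangle_ineq4 order_trans order_refl)
      have "norm (\<phi>' t - \<phi>' 0) \<le> e * norm (t *\<^sub>R u + s *\<^sub>R v) + e * norm (t *\<^sub>R u) + e * norm (s *\<^sub>R v)"
        unfolding eq using R[OF n1] R[OF n2] R[OF n3] tri by (meson add_mono order_trans)
      also have "\<dots> \<le> e * (s * norm u + s * norm v) + e * (s * norm u) + e * (s * norm v)"
      proof -
        have a1: "norm (t *\<^sub>R u) \<le> s * norm u" using t by (simp add: mult_right_mono)
        have a2: "norm (s *\<^sub>R v) \<le> s * norm v" using s by simp
        have a0: "norm (t *\<^sub>R u + s *\<^sub>R v) \<le> s * norm u + s * norm v"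
          using norm_triangle_ineq[of "t *\<^sub>R u" "s *\<^sub>R v"] a1 a2 by linarith
        have "e * norm (t *\<^sub>R u + s *\<^sub>R v) \<le> e * (s * norm u + s * norm v)"
          using a0 e by (intro mult_left_mono) auto
        moreover have "e * norm (t *\<^sub>R u) \<le> e * (s * norm u)" using a1 e by (intro mult_left_mono) auto
        moreover have "e * norm (s *\<^sub>R v) \<le> e * (s * norm v)" using a2 e by (intro mult_left_mono) auto
        ultimately show ?thesis by linarith
      qed
      also have "\<dots> = B" unfolding B_def by (simp add: algebra_simps)
      finally show ?thesis .
    qed
    have seg: "closed_segment 0 s \<subseteq> {0..s}" using s by (simp add: closed_segment_eq_real_ivl)
    have mvt: "norm (\<phi> s - \<phi> 0 - (s - 0) *\<^sub>R \<phi>' 0) \<le> norm (s - 0) * B"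
      using vector_differentiable_bound_linearization[OF dphi seg bnd] s by simp
    have n3: "norm (s *\<^sub>R v) < \<delta>" using small[of 0 s] s by auto
    have Rs: "norm (s *\<^sub>R (?H (q + s *\<^sub>R v) - ?H q - L (s *\<^sub>R v))) \<le> s * (e * (s * norm v))"
      using R[OF n3] s by (simp add: mult_left_mono)
    let ?P = "\<phi> s - \<phi> 0 - (s - 0) *\<^sub>R \<phi>' 0"
    let ?Q = "s *\<^sub>R (?H (q + s *\<^sub>R v) - ?H q - L (s *\<^sub>R v))"
    have EQ: "(g (q + s *\<^sub>R u + s *\<^sub>R v) - g (q + s *\<^sub>R u) - g (q + s *\<^sub>R v) + g q) - (s * s) *\<^sub>R L v
        = ?P + ?Q"
      unfolding \<phi>_def \<phi>'_def by (simp add: L.scaleR algebra_simps)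
    have mvt': "norm ?P \<le> s * B" using mvt s by simp
    have "norm ((g (q + s *\<^sub>R u + s *\<^sub>R v) - g (q + s *\<^sub>R u) - g (q + s *\<^sub>R v) + g q) - (s * s) *\<^sub>R L v)
        = norm (?P + ?Q)" by (simp only: EQ)
    also have "\<dots> \<le> norm ?P + norm ?Q" by (rule norm_triangle_ineq)
    also have "\<dots> \<le> s * B + s * (e * (s * norm v))" by (rule add_mono[OF mvt' Rs])
    also have "\<dots> = e * (s * s) * (2 * norm u + 3 * norm v)" unfolding B_def by (simp add: algebra_simps)
    finally show "norm ((g (q + s *\<^sub>R u + s *\<^sub>R v) - g (q + s *\<^sub>R u) - g (q + s *\<^sub>R v) + g q) - (s * s) *\<^sub>R L v)
       \<le> e * (s * s) * (2 * norm u + 3 * norm v)" .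
  qed
qed

lemma le_all_pos_zero:
  fixes x c :: real
  assumes "\<And>e. e > 0 \<Longrightarrow> x \<le> e * c" "c \<ge> 0"
  shows "x \<le> 0"
proof (rule ccontr)
  assume "\<not> x \<le> 0"
  then have x: "x > 0" by simp
  have "x \<le> (x / (2 * (c + 1))) * c" using assms(1)[of "x / (2 * (c + 1))"] x assms(2) by simp
  also have "\<dots> = x * (c / (2 * (c + 1)))" by simp
  also have "\<dots> < x * 1" using x assms(2) by (intro mult_strict_left_mono) (auto simp: field_simps)
  finally show False by simp
qed

lemma schwarz_at:
  fixes g :: "'v::real_normed_vector \<Rightarrow> 'w::real_normed_vector"
  assumes r: "r > 0" and dg: "\<forall>x\<in>ball q r. g differentiable (at x)"
    and du: "(\<lambda>x. frechet_derivative g (at x) u) differentiable (at q)"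
    and dv: "(\<lambda>x. frechet_derivative g (at x) v) differentiable (at q)"
  shows "frechet_derivative (\<lambda>x. frechet_derivative g (at x) u) (at q) v =
         frechet_derivative (\<lambda>x. frechet_derivative g (at x) v) (at q) u"
proof -
  let ?Lu = "frechet_derivative (\<lambda>x. frechet_derivative g (at x) u) (at q)"
  let ?Lv = "frechet_derivative (\<lambda>x. frechet_derivative g (at x) v) (at q)"
  have Du: "((\<lambda>x. frechet_derivative g (at x) u) has_derivative ?Lu) (at q)"
    using du by (simp add: frechet_derivative_works)
  have Dv: "((\<lambda>x. frechet_derivative g (at x) v) has_derivative ?Lv) (at q)"
    using dv by (simp add: frechet_derivative_works)
  have "norm (?Lu v - ?Lv u) \<le> e * (5 * (norm u + norm v))" if e: "e > 0" for e
  proof -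
    obtain s1 where s1: "s1 > 0" and S1: "\<And>s. 0 < s \<and> s \<le> s1 \<Longrightarrow>
     norm ((g (q + s *\<^sub>R u + s *\<^sub>R v) - g (q + s *\<^sub>R u) - g (q + s *\<^sub>R v) + g q) - (s * s) *\<^sub>R ?Lu v)
       \<le> e * (s * s) * (2 * norm u + 3 * norm v)"
      using schwarz_aux[OF r dg Du e, of v] by blast
    obtain s2 where s2: "s2 > 0" and S2: "\<And>s. 0 < s \<and> s \<le> s2 \<Longrightarrow>
     norm ((g (q + s *\<^sub>R v + s *\<^sub>R u) - g (q + s *\<^sub>R v) - g (q + s *\<^sub>R u) + g q) - (s * s) *\<^sub>R ?Lv u)
       \<le> e * (s * s) * (2 * norm v + 3 * norm u)"
      using schwarz_aux[OF r dg Dv e, of u] by blast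
    define s where "s = min s1 s2"
    have s: "s > 0" "s \<le> s1" "s \<le> s2" using s1 s2 by (auto simp: s_def)
    let ?D = "g (q + s *\<^sub>R u + s *\<^sub>R v) - g (q + s *\<^sub>R u) - g (q + s *\<^sub>R v) + g q"
    have comm: "g (q + s *\<^sub>R v + s *\<^sub>R u) - g (q + s *\<^sub>R v) - g (q + s *\<^sub>R u) + g q = ?D"
      by (simp add: add.commute add.left_commute)
    have A: "norm (?D - (s * s) *\<^sub>R ?Lu v) \<le> e * (s * s) * (2 * norm u + 3 * norm v)"
      using S1 s by blast
    have B: "norm (?D - (s * s) *\<^sub>R ?Lv u) \<le> e * (s * s) * (2 * norm v + 3 * norm u)"
      using S2[of s] s comm by simp
    have "(s * s) *\<^sub>R (?Lu v - ?Lv u) = (?D - (s * s) *\<^sub>R ?Lv u) - (?D - (s * s) *\<^sub>R ?Lu v)"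
      by (simp add: algebra_simps)
    then have "norm ((s * s) *\<^sub>R (?Lu v - ?Lv u)) \<le>
        e * (s * s) * (2 * norm v + 3 * norm u) + e * (s * s) * (2 * norm u + 3 * norm v)"
      using A B norm_triangle_ineq4[of "?D - (s * s) *\<^sub>R ?Lv u" "?D - (s * s) *\<^sub>R ?Lu v"]
      by simp
    also have "\<dots> = (s * s) * (e * (5 * (norm u + norm v)))" by (simp add: algebra_simps)
    finally have "(s * s) * norm (?Lu v - ?Lv u) \<le> (s * s) * (e * (5 * (norm u + norm v)))"
      using s by simp
    then show ?thesis using s by (simp add: mult_le_cancel_left_pos)
  qed
  then have "norm (?Lu v - ?Lv u) \<le> 0"
    by (intro le_all_pos_zero[of _ "5 * (norm u + norm v)"]) auto
  then show ?thesis by simp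
qed

lemma smooth_inner:
  fixes f :: "'v::real_normed_vector \<Rightarrow> 'w::real_normed_vector"
  assumes "smooth n f S"
  shows "smooth (n - length ys) (\<lambda>q. hderiv S (length ys) f q ys) S"
  unfolding smooth_def
proof (intro allI impI ballI)
  fix j and hs :: "'v list" and p assume j: "j < n - length ys" and l: "length hs = j" and p: "p \<in> S"
  have eq: "(\<lambda>q. hderiv S j (\<lambda>q. hderiv S (length ys) f q ys) q hs) =
            (\<lambda>q. hderiv S (length (hs @ ys)) f q (hs @ ys))"
    using hderiv_append[of S hs ys f] l by auto
  show "(\<lambda>q. hderiv S j (\<lambda>q. hderiv S (length ys) f q ys) q hs) differentiable (at p within S)"
    unfolding eq using smoothD[OF assms _ _ p, of "length (hs @ ys)" "hs @ ys"] j l by simp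
qed

lemma zero_on_closure_interior:
  fixes Q :: "'v::real_normed_vector \<Rightarrow> 'w::real_normed_vector"
  assumes c: "continuous_on S Q" and z: "\<forall>x\<in>interior S. Q x = 0"
    and p: "p \<in> S" "p \<in> closure (interior S)"
  shows "Q p = 0"
proof -
  obtain T where T: "closed T" "{x \<in> S. Q x = 0} = S \<inter> T"
    using continuous_closedin_preimage_constant[OF c, of 0] closedin_closed by blast
  have "interior S \<subseteq> T" using z T(2) interior_subset by blast
  then have "closure (interior S) \<subseteq> T" using T(1) by (rule closure_minimal)
  then have "p \<in> S \<inter> T" using p by blast
  then show ?thesis using T(2) by blast
qed

lemma hderiv2_swap_interior:
  fixes g :: "'v::real_normed_vector \<Rightarrow> 'w::real_normed_vector"
  assumes sm: "smooth 2 g S" and p: "p \<in> interior S"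
  shows "hderiv S 2 g p [v, u] = hderiv S 2 g p [u, v]"
proof -
  obtain r where r: "r > 0" "ball p r \<subseteq> interior S"
    using p open_interior open_contains_ball by blast
  have inS: "x \<in> S" if "x \<in> ball p r" for x using r that interior_subset by blast
  have atx: "at x within S = at x" if "x \<in> ball p r" for x
    using r that by (intro at_within_interior) blast
  have dg: "\<forall>x\<in>ball p r. g differentiable (at x)"
  proof
    fix x assume x: "x \<in> ball p r"
    have "(\<lambda>q. hderiv S 0 g q []) differentiable (at x within S)"
      using smoothD[OF sm, of 0 "[]"] inS[OF x] by simp
    then show "g differentiable (at x)" using atx[OF x] by simp
  qed
  have H: "\<forall>x\<in>ball p r. hderiv S 1 g x [w] = frechet_derivative g (at x) w" for w
    using atx by simp
  have dH: "(\<lambda>x. frechet_derivative g (at x) w) differentiable (at p)" for w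
  proof -
    have "(\<lambda>q. hderiv S 1 g q [w]) differentiable (at p within S)"
      using smoothD[OF sm, of 1 "[w]" p] p interior_subset by auto
    then have "(\<lambda>q. hderiv S 1 g q [w]) differentiable (at p)"
      using atx[of p] r by simp
    then obtain D where "((\<lambda>q. hderiv S 1 g q [w]) has_derivative D) (at p)"
      by (auto simp: differentiable_def)
    then have "((\<lambda>x. frechet_derivative g (at x) w) has_derivative D) (at p)"
      using has_derivative_transform_within_open[of _ D p UNIV "ball p r"] H[of w] r by auto
    then show ?thesis by (auto simp: differentiable_def)
  qed
  have fdH: "frechet_derivative (\<lambda>q. hderiv S 1 g q [w]) (at p) =
             frechet_derivative (\<lambda>x. frechet_derivative g (at x) w) (at p)" for w
  proof -
    have "(\<lambda>q. hderiv S 1 g q [w]) differentiable (at p within S)"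
      using smoothD[OF sm, of 1 "[w]" p] p interior_subset by auto
    then have d: "(\<lambda>q. hderiv S 1 g q [w]) differentiable (at p)"
      using atx[of p] r by simp
    show ?thesis
      by (rule frechet_derivative_transform_within_open[OF d, of "ball p r"]) (use r H in auto)
  qed
  have atp: "at p within S = at p" using atx[of p] r by simp
  have "hderiv S 2 g p [v, u] = frechet_derivative (\<lambda>q. hderiv S 1 g q [u]) (at p within S) v"
    using hderiv_Suc_Cons[of S 1 g p v "[u]"] by (simp del: hderiv.simps add: numeral_2_eq_2)
  also have "\<dots> = frechet_derivative (\<lambda>q. hderiv S 1 g q [u]) (at p) v" by (simp only: atp)
  also have "\<dots> = frechet_derivative (\<lambda>x. frechet_derivative g (at x) u) (at p) v" by (simp only: fdH)
  also have "\<dots> = frechet_derivative (\<lambda>x. frechet_derivative g (at x) v) (at p) u"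
    by (rule schwarz_at[OF r(1) dg dH dH])
  also have "\<dots> = frechet_derivative (\<lambda>q. hderiv S 1 g q [v]) (at p) u" by (simp only: fdH)
  also have "\<dots> = frechet_derivative (\<lambda>q. hderiv S 1 g q [v]) (at p within S) u" by (simp only: atp)
  also have "\<dots> = hderiv S 2 g p [u, v]"
    using hderiv_Suc_Cons[of S 1 g p u "[v]"] by (simp del: hderiv.simps add: numeral_2_eq_2)
  finally show ?thesis .
qed

lemma hderiv2_swap:
  fixes g :: "'v::real_normed_vector \<Rightarrow> 'w::real_normed_vector"
  assumes sm: "smooth 3 g S" and dense: "S \<subseteq> closure (interior S)" and p: "p \<in> S"
  shows "hderiv S 2 g p [v, u] = hderiv S 2 g p [u, v]"
proof -
  let ?Q = "\<lambda>x. hderiv S 2 g x [v, u] - hderiv S 2 g x [u, v]"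
  have sm2: "smooth 2 g S" using sm smooth_mono by fastforce
  have c: "continuous_on S ?Q"
  proof -
    have "continuous (at x within S) (\<lambda>x. hderiv S 2 g x hs)" if "x \<in> S" "length hs = 2" for x hs
      using smoothD[OF sm, of 2 hs x] that by (simp add: differentiable_imp_continuous_within)
    then show ?thesis unfolding continuous_on_eq_continuous_within
      by (auto intro!: continuous_intros)
  qed
  have "?Q p = 0"
    by (rule zero_on_closure_interior[OF c]) (use hderiv2_swap_interior[OF sm2] p dense in auto)
  then show ?thesis by simp
qed

lemma hderiv_swap:
  fixes f :: "'v::real_normed_vector \<Rightarrow> 'w::real_normed_vector"
  assumes sm: "smooth (length pre + 3 + length post) f S" and dense: "S \<subseteq> closure (interior S)"
    and p: "p \<in> S"
  shows "hderiv S (length pre + 2 + length post) f p (pre @ u # v # post) =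
         hderiv S (length pre + 2 + length post) f p (pre @ v # u # post)"
proof -
  let ?g = "\<lambda>q. hderiv S (length post) f q post"
  have smg: "smooth 3 ?g S"
    using smooth_inner[OF sm, of post] smooth_mono by fastforce
  have inner: "hderiv S (length ([a, b] @ post)) f q ([a, b] @ post) = hderiv S 2 ?g q [a, b]" for a b q
    using hderiv_append[of S "[a,b]" post f q] by (simp add: numeral_2_eq_2)
  have sw: "\<forall>q\<in>S. hderiv S (length ([u, v] @ post)) f q ([u, v] @ post) =
                  hderiv S (length ([v, u] @ post)) f q ([v, u] @ post)"
    using hderiv2_swap[OF smg dense] inner by metis
  have "hderiv S (length pre + 2 + length post) f p (pre @ u # v # post) =
        hderiv S (length pre + length ([u, v] @ post)) f p (pre @ ([u, v] @ post))" by simp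
  also have "\<dots> = hderiv S (length pre) (\<lambda>q. hderiv S (length ([u, v] @ post)) f q ([u, v] @ post)) p pre"
    by (rule hderiv_append)
  also have "\<dots> = hderiv S (length pre) (\<lambda>q. hderiv S (length ([v, u] @ post)) f q ([v, u] @ post)) p pre"
    by (rule hderiv_cong_on[OF sw p])
  also have "\<dots> = hderiv S (length pre + length ([v, u] @ post)) f p (pre @ ([v, u] @ post))"
    by (rule hderiv_append[symmetric])
  also have "\<dots> = hderiv S (length pre + 2 + length post) f p (pre @ v # u # post)" by simp
  finally show ?thesis .
qed

lemma perm_bubble:
  assumes sw: "\<And>pre u v post. length pre + 2 + length post = n \<Longrightarrow>
      M (pre @ u # v # post) = M (pre @ v # u # post)"
  shows "length pre + 1 + length ys1 + length ys2 = n \<Longrightarrow>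
         M (pre @ x # ys1 @ ys2) = M (pre @ ys1 @ x # ys2)"
proof (induction ys1 arbitrary: pre)
  case Nil then show ?case by simp
next
  case (Cons a ys1)
  have "M (pre @ x # (a # ys1) @ ys2) = M (pre @ a # x # (ys1 @ ys2))"
    using sw[of pre "ys1 @ ys2" x a] Cons.prems by simp
  also have "\<dots> = M ((pre @ [a]) @ x # ys1 @ ys2)" by simp
  also have "\<dots> = M ((pre @ [a]) @ ys1 @ x # ys2)" using Cons.IH[of "pre @ [a]"] Cons.prems by simp
  finally show ?case by simp
qed

lemma perm_invariant:
  assumes sw: "\<And>pre u v post. length pre + 2 + length post = n \<Longrightarrow>
      M (pre @ u # v # post) = M (pre @ v # u # post)"
  shows "mset xs = mset ys \<Longrightarrow> length pre + length xs = n \<Longrightarrow> M (pre @ xs) = M (pre @ ys)"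
proof (induction xs arbitrary: ys pre)
  case Nil then show ?case by simp
next
  case (Cons x xs)
  have "x \<in> set ys" using Cons.prems(1) by (metis list.set_intros(1) set_mset_mset)
  then obtain ys1 ys2 where ys: "ys = ys1 @ x # ys2" by (meson split_list)
  have ms: "mset xs = mset (ys1 @ ys2)" using Cons.prems(1) ys by simp
  have len: "length xs = length ys1 + length ys2" using ms by (metis length_append size_mset)
  have "M (pre @ x # xs) = M ((pre @ [x]) @ xs)" by simp
  also have "\<dots> = M ((pre @ [x]) @ (ys1 @ ys2))" using Cons.IH[OF ms, of "pre @ [x]"] Cons.prems(2) by simp
  also have "\<dots> = M (pre @ x # ys1 @ ys2)" by simp
  also have "\<dots> = M (pre @ ys1 @ x # ys2)"
  proof (rule perm_bubble[of n M, OF sw])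
    show "length pre + 1 + length ys1 + length ys2 = n" using Cons.prems(2) len by simp
  qed simp
  finally show ?case using ys by simp
qed

lemma hderiv_perm:
  fixes f :: "'v::real_normed_vector \<Rightarrow> 'w::real_normed_vector"
  assumes sm: "smooth (n + 1) f S" and dense: "S \<subseteq> closure (interior S)"
    and p: "p \<in> S" and ms: "mset xs = mset ys" and l: "length xs = n"
  shows "hderiv S n f p xs = hderiv S n f p ys"
proof -
  have sw: "hderiv S n f p (pre @ u # v # post) = hderiv S n f p (pre @ v # u # post)"
    if "length pre + 2 + length post = n" for pre u v post
  proof -
    have "n + 1 = length pre + 3 + length post" using that by simp
    then have "smooth (length pre + 3 + length post) f S" using sm by metis
    from hderiv_swap[OF this dense p, of u v] that show ?thesis by (simp del: hderiv.simps)
  qed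
  show ?thesis using perm_invariant[of n "hderiv S n f p", OF sw ms, of "[]"] l by simp
qed

lemma is_norm_nonneg: "is_norm N \<Longrightarrow> 0 \<le> N x"
  unfolding is_norm_def by blast

lemma is_norm_zero: "is_norm N \<Longrightarrow> N 0 = 0"
  unfolding is_norm_def by (metis abs_zero mult_zero_left scaleR_zero_left)

lemma is_norm_scale: "is_norm N \<Longrightarrow> N (c *\<^sub>R x) = \<bar>c\<bar> * N x"
  unfolding is_norm_def by blast

lemma is_norm_add: "is_norm N \<Longrightarrow> N (x + y) \<le> N x + N y"
  unfolding is_norm_def by blast

lemma is_norm_abs: "is_norm (abs :: real \<Rightarrow> real)"
  unfolding is_norm_def by (auto simp: abs_mult abs_triangle_ineq)

lemma prod_norm_nonneg: "is_norm N \<Longrightarrow> 0 \<le> prod_norm N e"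
  unfolding prod_norm_def using is_norm_nonneg by (metis abs_ge_zero max.coboundedI2)

lemma prod_list_nonneg_map: "(\<And>x. 0 \<le> (f x::real)) \<Longrightarrow> 0 \<le> prod_list (map f xs)"
  by (induction xs) auto

lemma prod_list_upd:
  fixes f :: "'b \<Rightarrow> real"
  assumes "i < length xs"
  shows "prod_list (map f (xs[i := a])) =
         prod_list (map f (take i xs)) * f a * prod_list (map f (drop (Suc i) xs))"
    and "prod_list (map f xs) =
         prod_list (map f (take i xs)) * f (xs ! i) * prod_list (map f (drop (Suc i) xs))"
proof -
  show "prod_list (map f (xs[i := a])) =
         prod_list (map f (take i xs)) * f a * prod_list (map f (drop (Suc i) xs))"
    using assms by (simp add: upd_conv_take_nth_drop)
  have "xs = take i xs @ xs ! i # drop (Suc i) xs" using assms by (simp add: id_take_nth_drop)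
  then have "prod_list (map f xs) = prod_list (map f (take i xs @ xs ! i # drop (Suc i) xs))" by simp
  then show "prod_list (map f xs) =
         prod_list (map f (take i xs)) * f (xs ! i) * prod_list (map f (drop (Suc i) xs))"
    by (simp add: mult.assoc)
qed

definition pure_dir :: "('a::real_vector \<times> real) \<Rightarrow> bool" where
  "pure_dir e \<longleftrightarrow> snd e = 0 \<or> e = (0, 1)"

lemma multilinear_expand:
  fixes M :: "('a::real_vector \<times> real) list \<Rightarrow> 'w::real_vector"
  assumes lin: "\<And>xs i a b c. length xs = n \<Longrightarrow> i < n \<Longrightarrow>
      M (xs[i := a + c *\<^sub>R b]) = M (xs[i := a]) + c *\<^sub>R M (xs[i := b])"
    and nrm: "is_norm nrm" and N: "is_norm N" and B: "B \<ge> 0"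
    and pure: "\<And>xs. length xs = n \<Longrightarrow> (\<forall>e\<in>set xs. pure_dir e) \<Longrightarrow>
        nrm (M xs) \<le> B * prod_list (map (prod_norm N) xs)"
  shows "i \<le> n \<Longrightarrow> length xs = n \<Longrightarrow> (\<forall>j. i \<le> j \<and> j < n \<longrightarrow> pure_dir (xs ! j)) \<Longrightarrow>
      nrm (M xs) \<le> 2 ^ i * B * prod_list (map (prod_norm N) xs)"
proof (induction i arbitrary: xs)
  case 0
  have "\<forall>e\<in>set xs. pure_dir e" using 0 by (metis in_set_conv_nth zero_le)
  then show ?case using pure 0 by simp
next
  case (Suc i)
  have i: "i < n" using Suc.prems by simp
  have il: "i < length xs" using i Suc.prems by simp
  obtain h t where e: "xs ! i = (h, t)" by (cases "xs ! i") auto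
  let ?a = "(h, 0::real)" and ?b = "(0::'a, 1::real)"
  have split: "xs ! i = ?a + t *\<^sub>R ?b" using e by simp
  have xs_eq: "xs = xs[i := ?a + t *\<^sub>R ?b]" using split by (metis list_update_id)
  have M_eq: "M xs = M (xs[i := ?a]) + t *\<^sub>R M (xs[i := ?b])"
    using lin[of xs i ?a t ?b] Suc.prems(2) i xs_eq by metis
  have pa: "\<forall>j. i \<le> j \<and> j < n \<longrightarrow> pure_dir ((xs[i := ?a]) ! j)"
  proof (intro allI impI)
    fix j assume j: "i \<le> j \<and> j < n"
    show "pure_dir ((xs[i := ?a]) ! j)"
    proof (cases "j = i")
      case True then show ?thesis using il by (simp add: pure_dir_def)
    next
      case False
      then have "Suc i \<le> j \<and> j < n" using j by simp
      then have "pure_dir (xs ! j)" using Suc.prems(3) by blast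
      then show ?thesis using False by simp
    qed
  qed
  have pb: "\<forall>j. i \<le> j \<and> j < n \<longrightarrow> pure_dir ((xs[i := ?b]) ! j)"
  proof (intro allI impI)
    fix j assume j: "i \<le> j \<and> j < n"
    show "pure_dir ((xs[i := ?b]) ! j)"
    proof (cases "j = i")
      case True then show ?thesis using il by (simp add: pure_dir_def)
    next
      case False
      then have "Suc i \<le> j \<and> j < n" using j by simp
      then have "pure_dir (xs ! j)" using Suc.prems(3) by blast
      then show ?thesis using False by simp
    qed
  qed
  have IHa: "nrm (M (xs[i := ?a])) \<le> 2 ^ i * B * prod_list (map (prod_norm N) (xs[i := ?a]))"
    using Suc.IH[of "xs[i := ?a]"] Suc.prems pa by simp
  have IHb: "nrm (M (xs[i := ?b])) \<le> 2 ^ i * B * prod_list (map (prod_norm N) (xs[i := ?b]))"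
    using Suc.IH[of "xs[i := ?b]"] Suc.prems pb by simp
  define P1 where "P1 = prod_list (map (prod_norm N) (take i xs))"
  define P2 where "P2 = prod_list (map (prod_norm N) (drop (Suc i) xs))"
  have P1: "P1 \<ge> 0" unfolding P1_def by (rule prod_list_nonneg_map[OF prod_norm_nonneg[OF N]])
  have P2: "P2 \<ge> 0" unfolding P2_def by (rule prod_list_nonneg_map[OF prod_norm_nonneg[OF N]])
  have Pa: "prod_list (map (prod_norm N) (xs[i := ?a])) = P1 * N h * P2"
    using prod_list_upd(1)[OF il] N by (simp add: P1_def P2_def prod_norm_def is_norm_nonneg)
  have Pb: "prod_list (map (prod_norm N) (xs[i := ?b])) = P1 * P2"
    using prod_list_upd(1)[OF il] N by (simp add: P1_def P2_def prod_norm_def is_norm_zero)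
  have Px: "prod_list (map (prod_norm N) xs) = P1 * max (N h) \<bar>t\<bar> * P2"
    using prod_list_upd(2)[OF il] e by (simp add: P1_def P2_def prod_norm_def)
  have "nrm (M xs) \<le> nrm (M (xs[i := ?a])) + \<bar>t\<bar> * nrm (M (xs[i := ?b]))"
    using M_eq is_norm_add[OF nrm] is_norm_scale[OF nrm] by metis
  also have "\<dots> \<le> 2 ^ i * B * (P1 * N h * P2) + \<bar>t\<bar> * (2 ^ i * B * (P1 * P2))"
    using IHa IHb Pa Pb by (intro add_mono mult_left_mono) auto
  also have "\<dots> = 2 ^ i * B * (P1 * P2) * (N h + \<bar>t\<bar>)" by (simp add: algebra_simps)
  also have "\<dots> \<le> 2 ^ i * B * (P1 * P2) * (2 * max (N h) \<bar>t\<bar>)"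
    using B P1 P2 by (intro mult_left_mono) auto
  also have "\<dots> = 2 ^ Suc i * B * prod_list (map (prod_norm N) xs)"
    unfolding Px by (simp add: algebra_simps)
  finally show ?case .
qed

fun splits :: "'a list \<Rightarrow> ('a list \<times> 'a list) list" where
  "splits [] = [([], [])]"
| "splits (u # hs) = map (\<lambda>x. (u # fst x, snd x)) (splits hs) @ map (\<lambda>x. (fst x, u # snd x)) (splits hs)"

lemma splits_len: "x \<in> set (splits hs) \<Longrightarrow> length (fst x) + length (snd x) = length hs"
  by (induction hs arbitrary: x) auto

lemma splits_prod:
  fixes f :: "'a \<Rightarrow> real"
  shows "x \<in> set (splits hs) \<Longrightarrow> prod_list (map f (fst x)) * prod_list (map f (snd x)) = prod_list (map f hs)"
  by (induction hs arbitrary: x) (auto simp: algebra_simps)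

lemma splits_length: "length (splits hs) = 2 ^ length hs"
  by (induction hs) auto

lemma has_derivative_sum_list:
  assumes "\<And>x. x \<in> set L \<Longrightarrow> (F x has_derivative F' x) net"
  shows "((\<lambda>q. sum_list (map (\<lambda>x. F x q) L)) has_derivative (\<lambda>h. sum_list (map (\<lambda>x. F' x h) L))) net"
  using assms
proof (induction L)
  case Nil then show ?case by (simp add: has_derivative_const)
next
  case (Cons a L)
  then show ?case by (simp add: has_derivative_add)
qed

lemma leibniz:
  fixes a :: "'v::real_normed_vector \<Rightarrow> real" and f :: "'v \<Rightarrow> 'w::real_normed_vector"
  assumes ap: "approach S" and sa: "smooth n a S" and sf: "smooth n f S"
  shows "length hs \<le> n \<Longrightarrow> p \<in> S \<Longrightarrow>
    hderiv S (length hs) (\<lambda>q. a q *\<^sub>R f q) p hs =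
      sum_list (map (\<lambda>x. hderiv S (length (fst x)) a p (fst x) *\<^sub>R hderiv S (length (snd x)) f p (snd x)) (splits hs))"
proof (induction hs arbitrary: p)
  case Nil then show ?case by simp
next
  case (Cons u hs)
  let ?A = "\<lambda>x q. hderiv S (length (fst x)) a q (fst x)"
  let ?F = "\<lambda>x q. hderiv S (length (snd x)) f q (snd x)"
  let ?dA = "\<lambda>x. frechet_derivative (?A x) (at p within S)"
  let ?dF = "\<lambda>x. frechet_derivative (?F x) (at p within S)"
  have eqS: "\<forall>q\<in>S. hderiv S (length hs) (\<lambda>q. a q *\<^sub>R f q) q hs =
       sum_list (map (\<lambda>x. ?A x q *\<^sub>R ?F x q) (splits hs))"
    using Cons.IH Cons.prems by simp
  have D: "((\<lambda>q. sum_list (map (\<lambda>x. ?A x q *\<^sub>R ?F x q) (splits hs))) has_derivative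
       (\<lambda>h. sum_list (map (\<lambda>x. ?A x p *\<^sub>R ?dF x h + ?dA x h *\<^sub>R ?F x p) (splits hs)))) (at p within S)"
  proof (rule has_derivative_sum_list)
    fix x assume x: "x \<in> set (splits hs)"
    have l: "length (fst x) < n" "length (snd x) < n"
      using splits_len[OF x] Cons.prems(1) by auto
    have da: "(?A x has_derivative ?dA x) (at p within S)"
      using smoothD[OF sa l(1) refl Cons.prems(2)] by (simp add: frechet_derivative_works)
    have df: "(?F x has_derivative ?dF x) (at p within S)"
      using smoothD[OF sf l(2) refl Cons.prems(2)] by (simp add: frechet_derivative_works)
    show "((\<lambda>q. ?A x q *\<^sub>R ?F x q) has_derivative (\<lambda>h. ?A x p *\<^sub>R ?dF x h + ?dA x h *\<^sub>R ?F x p)) (at p within S)"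
      by (rule has_derivative_scaleR[OF da df])
  qed
  have "hderiv S (length (u # hs)) (\<lambda>q. a q *\<^sub>R f q) p (u # hs) =
        frechet_derivative (\<lambda>q. hderiv S (length hs) (\<lambda>q. a q *\<^sub>R f q) q hs) (at p within S) u"
    by simp
  also have "\<dots> = frechet_derivative (\<lambda>q. sum_list (map (\<lambda>x. ?A x q *\<^sub>R ?F x q) (splits hs))) (at p within S) u"
    by (simp only: fd_cong_on[OF eqS Cons.prems(2)])
  also have "\<dots> = sum_list (map (\<lambda>x. ?A x p *\<^sub>R ?dF x u + ?dA x u *\<^sub>R ?F x p) (splits hs))"
    by (simp only: fd_eq[OF ap Cons.prems(2) D])
  also have "\<dots> = sum_list (map (\<lambda>x. ?dA x u *\<^sub>R ?F x p) (splits hs)) + sum_list (map (\<lambda>x. ?A x p *\<^sub>R ?dF x u) (splits hs))"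
    by (simp add: sum_list_addf add.commute)
  also have "\<dots> = sum_list (map (\<lambda>x. hderiv S (length (fst x)) a p (fst x) *\<^sub>R hderiv S (length (snd x)) f p (snd x)) (splits (u # hs)))"
    by (simp add: o_def)
  finally show ?case .
qed

lemma differentiable_sum_list:
  assumes "\<And>x. x \<in> set L \<Longrightarrow> F x differentiable net"
  shows "(\<lambda>q. sum_list (map (\<lambda>x. F x q) L)) differentiable net"
proof -
  have "\<And>x. x \<in> set L \<Longrightarrow> (F x has_derivative frechet_derivative (F x) net) net"
    using assms frechet_derivative_works by blast
  then have "((\<lambda>q. sum_list (map (\<lambda>x. F x q) L)) has_derivative
      (\<lambda>h. sum_list (map (\<lambda>x. frechet_derivative (F x) net h) L))) net"
    by (rule has_derivative_sum_list)
  then show ?thesis by (auto simp: differentiable_def)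
qed

lemma smooth_scaleR:
  fixes a :: "'v::real_normed_vector \<Rightarrow> real" and f :: "'v \<Rightarrow> 'w::real_normed_vector"
  assumes ap: "approach S" and sa: "smooth n a S" and sf: "smooth n f S"
  shows "smooth n (\<lambda>q. a q *\<^sub>R f q) S"
  unfolding smooth_def
proof (intro allI impI ballI)
  fix j and hs :: "'v list" and p
  assume j: "j < n" and l: "length hs = j" and p: "p \<in> S"
  let ?A = "\<lambda>x q. hderiv S (length (fst x)) a q (fst x)"
  let ?F = "\<lambda>x q. hderiv S (length (snd x)) f q (snd x)"
  have eqS: "\<forall>q\<in>S. hderiv S j (\<lambda>q. a q *\<^sub>R f q) q hs = sum_list (map (\<lambda>x. ?A x q *\<^sub>R ?F x q) (splits hs))"
    using leibniz[OF ap sa sf] j l by auto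
  have "(\<lambda>q. sum_list (map (\<lambda>x. ?A x q *\<^sub>R ?F x q) (splits hs))) differentiable (at p within S)"
  proof (rule differentiable_sum_list)
    fix x assume x: "x \<in> set (splits hs)"
    have ll: "length (fst x) < n" "length (snd x) < n" using splits_len[OF x] j l by auto
    show "(\<lambda>q. ?A x q *\<^sub>R ?F x q) differentiable (at p within S)"
      using smoothD[OF sa ll(1) refl p] smoothD[OF sf ll(2) refl p]
      by (intro differentiable_scaleR) auto
  qed
  then show "(\<lambda>q. hderiv S j (\<lambda>q. a q *\<^sub>R f q) q hs) differentiable (at p within S)"
    using differentiable_cong_on[OF eqS p] by simp
qed

lemma hderiv_const_add:
  fixes f :: "'v::real_normed_vector \<Rightarrow> 'w::real_normed_vector"
  assumes ap: "approach S"
  shows "smooth (Suc j) f S \<Longrightarrow> p \<in> S \<Longrightarrow> hderiv S (Suc j) (\<lambda>q. c + f q) p hs = hderiv S (Suc j) f p hs"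
proof (induction j arbitrary: p hs)
  case 0
  have "f differentiable (at p within S)" using smoothD[OF 0(1), of 0 "[]" p] 0(2) by simp
  then have d: "(f has_derivative frechet_derivative f (at p within S)) (at p within S)"
    by (simp add: frechet_derivative_works)
  have "((\<lambda>q. c + f q) has_derivative frechet_derivative f (at p within S)) (at p within S)"
    using has_derivative_add[OF has_derivative_const d] by simp
  from fd_eq[OF ap 0(2) this] show ?case by simp
next
  case (Suc j)
  have sm: "smooth (Suc j) f S" by (rule smooth_mono[OF Suc.prems(1)]) simp
  have "\<forall>q\<in>S. hderiv S (Suc j) (\<lambda>q. c + f q) q (tl hs) = hderiv S (Suc j) f q (tl hs)"
    using Suc.IH[OF sm] by blast
  from fd_cong_on[OF this Suc.prems(2)] show ?case
    by (simp only: hderiv.simps(2)[of S "Suc j" "\<lambda>q. c + f q" p hs] hderiv.simps(2)[of S "Suc j" f p hs])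
qed

lemma smooth_const_add:
  fixes f :: "'v::real_normed_vector \<Rightarrow> 'w::real_normed_vector"
  assumes ap: "approach S" and sf: "smooth n f S"
  shows "smooth n (\<lambda>q. c + f q) S"
  unfolding smooth_def
proof (intro allI impI ballI)
  fix j and hs :: "'v list" and p
  assume j: "j < n" and l: "length hs = j" and p: "p \<in> S"
  show "(\<lambda>q. hderiv S j (\<lambda>q. c + f q) q hs) differentiable (at p within S)"
  proof (cases j)
    case 0
    have "f differentiable (at p within S)" using smoothD[OF sf, of 0 "[]" p] j p 0 by simp
    then show ?thesis using 0 by simp
  next
    case (Suc j')
    have sm: "smooth (Suc j') f S" by (rule smooth_mono[OF sf]) (use j Suc in simp)
    have eq: "\<forall>q\<in>S. hderiv S j (\<lambda>q. c + f q) q hs = hderiv S j f q hs"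
      using hderiv_const_add[OF ap sm] Suc by simp
    from differentiable_cong_on[OF eq p] smoothD[OF sf j l p] show ?thesis by simp
  qed
qed

lemma hderiv_pair:
  fixes f :: "'v::real_normed_vector \<Rightarrow> 'w::real_normed_vector" and g :: "'v \<Rightarrow> 'u::real_normed_vector"
  assumes ap: "approach S"
  shows "smooth j f S \<Longrightarrow> smooth j g S \<Longrightarrow> length hs = j \<Longrightarrow> p \<in> S \<Longrightarrow>
     hderiv S j (\<lambda>q. (f q, g q)) p hs = (hderiv S j f p hs, hderiv S j g p hs)"
proof (induction j arbitrary: p hs)
  case 0 then show ?case by simp
next
  case (Suc j)
  have smf: "smooth j f S" by (rule smooth_mono[OF Suc.prems(1)]) simp
  have smg: "smooth j g S" by (rule smooth_mono[OF Suc.prems(2)]) simp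
  have lt: "length (tl hs) = j" using Suc.prems(3) by simp
  have eqS: "\<forall>q\<in>S. hderiv S j (\<lambda>q. (f q, g q)) q (tl hs) = (hderiv S j f q (tl hs), hderiv S j g q (tl hs))"
    using Suc.IH[OF smf smg lt] by blast
  have df: "((\<lambda>q. hderiv S j f q (tl hs)) has_derivative frechet_derivative (\<lambda>q. hderiv S j f q (tl hs)) (at p within S)) (at p within S)"
    using smoothD[OF Suc.prems(1) _ lt Suc.prems(4)] by (simp add: frechet_derivative_works)
  have dg: "((\<lambda>q. hderiv S j g q (tl hs)) has_derivative frechet_derivative (\<lambda>q. hderiv S j g q (tl hs)) (at p within S)) (at p within S)"
    using smoothD[OF Suc.prems(2) _ lt Suc.prems(4)] by (simp add: frechet_derivative_works)
  have "frechet_derivative (\<lambda>q. hderiv S j (\<lambda>q. (f q, g q)) q (tl hs)) (at p within S) =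
        frechet_derivative (\<lambda>q. (hderiv S j f q (tl hs), hderiv S j g q (tl hs))) (at p within S)"
    by (rule fd_cong_on[OF eqS Suc.prems(4)])
  also have "\<dots> = (\<lambda>h. (frechet_derivative (\<lambda>q. hderiv S j f q (tl hs)) (at p within S) h,
                        frechet_derivative (\<lambda>q. hderiv S j g q (tl hs)) (at p within S) h))"
    by (rule fd_eq[OF ap Suc.prems(4) has_derivative_Pair[OF df dg]])
  finally show ?case
    by (simp only: hderiv.simps(2)[of S j "\<lambda>q. (f q, g q)" p hs] hderiv.simps(2)[of S j f p hs]
        hderiv.simps(2)[of S j g p hs])
qed

lemma dP:
  fixes S :: "('a::real_normed_vector \<times> real) set"
  assumes pos: "\<sigma> * snd q > 0"
  shows "((\<lambda>q. K * (\<sigma> * snd q) powr \<gamma>) has_derivative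
           (\<lambda>h. K * (\<gamma> * (\<sigma> * snd q) powr (\<gamma> - 1) * (\<sigma> * snd h)))) (at q within S)"
proof -
  have a: "((\<lambda>q::'a \<times> real. \<sigma> * snd q) has_derivative (\<lambda>h. \<sigma> * snd h)) (at q within S)"
    by (intro derivative_eq_intros) auto
  have b: "((\<lambda>z. z powr \<gamma>) has_derivative (*) (\<gamma> * (\<sigma> * snd q) powr (\<gamma> - 1))) (at (\<sigma> * snd q))"
    using has_real_derivative_powr[OF pos, of \<gamma>] by (simp add: has_field_derivative_def)
  have c: "((\<lambda>q. (\<sigma> * snd q) powr \<gamma>) has_derivative
       (\<lambda>h. (\<gamma> * (\<sigma> * snd q) powr (\<gamma> - 1)) * (\<sigma> * snd h))) (at q within S)"
    using has_derivative_in_compose[OF a has_derivative_at_withinI[OF b]] by simp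
  have "((\<lambda>q. K * (\<sigma> * snd q) powr \<gamma>) has_derivative
       (\<lambda>h. K * ((\<gamma> * (\<sigma> * snd q) powr (\<gamma> - 1)) * (\<sigma> * snd h)))) (at q within S)"
    by (rule has_derivative_mult_right[OF c])
  then show ?thesis by (simp add: algebra_simps)
qed

definition cpow :: "real \<Rightarrow> nat \<Rightarrow> real" where
  "cpow \<beta> n = (\<Prod>i<n. \<beta> - real i)"

lemma hderiv_powr:
  fixes S :: "('a::real_normed_vector \<times> real) set"
  assumes ap: "approach S" and pos: "\<forall>q\<in>S. \<sigma> * snd q > 0"
  shows "q \<in> S \<Longrightarrow> hderiv S (length xs) (\<lambda>q. (\<sigma> * snd q) powr \<alpha>) q xs =
      (cpow \<alpha> (length xs) * prod_list (map (\<lambda>e. \<sigma> * snd e) xs)) * (\<sigma> * snd q) powr (\<alpha> - real (length xs))"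
proof (induction xs arbitrary: q)
  case Nil then show ?case by (simp add: cpow_def)
next
  case (Cons u xs)
  let ?K = "cpow \<alpha> (length xs) * prod_list (map (\<lambda>e. \<sigma> * snd e) xs)"
  let ?g = "\<alpha> - real (length xs)"
  have eqS: "\<forall>q\<in>S. hderiv S (length xs) (\<lambda>q. (\<sigma> * snd q) powr \<alpha>) q xs = ?K * (\<sigma> * snd q) powr ?g"
    using Cons.IH by blast
  have "hderiv S (length (u # xs)) (\<lambda>q. (\<sigma> * snd q) powr \<alpha>) q (u # xs) =
     frechet_derivative (\<lambda>q. hderiv S (length xs) (\<lambda>q. (\<sigma> * snd q) powr \<alpha>) q xs) (at q within S) u"
    by simp
  also have "\<dots> = frechet_derivative (\<lambda>q. ?K * (\<sigma> * snd q) powr ?g) (at q within S) u"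
    by (simp only: fd_cong_on[OF eqS Cons.prems])
  also have "\<dots> = ?K * (?g * (\<sigma> * snd q) powr (?g - 1) * (\<sigma> * snd u))"
    by (simp only: fd_eq[OF ap Cons.prems dP[OF pos[rule_format, OF Cons.prems]]])
  also have "\<dots> = (cpow \<alpha> (length (u # xs)) * prod_list (map (\<lambda>e. \<sigma> * snd e) (u # xs))) *
      (\<sigma> * snd q) powr (\<alpha> - real (length (u # xs)))"
    by (simp add: cpow_def algebra_simps diff_diff_add)
  finally show ?case .
qed

lemma smooth_powr:
  fixes S :: "('a::real_normed_vector \<times> real) set"
  assumes ap: "approach S" and pos: "\<forall>q\<in>S. \<sigma> * snd q > 0"
  shows "smooth n (\<lambda>q. (\<sigma> * snd q) powr \<alpha>) S"
  unfolding smooth_def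
proof (intro allI impI ballI)
  fix j and hs :: "('a \<times> real) list" and p
  assume j: "j < n" and l: "length hs = j" and p: "p \<in> S"
  let ?K = "cpow \<alpha> j * prod_list (map (\<lambda>e. \<sigma> * snd e) hs)"
  have eqS: "\<forall>q\<in>S. hderiv S j (\<lambda>q. (\<sigma> * snd q) powr \<alpha>) q hs = ?K * (\<sigma> * snd q) powr (\<alpha> - real j)"
    using hderiv_powr[OF ap pos] l by blast
  have "(\<lambda>q. ?K * (\<sigma> * snd q) powr (\<alpha> - real j)) differentiable (at p within S)"
    using dP[OF pos[rule_format, OF p]] by (auto simp: differentiable_def)
  then show "(\<lambda>q. hderiv S j (\<lambda>q. (\<sigma> * snd q) powr \<alpha>) q hs) differentiable (at p within S)"
    using differentiable_cong_on[OF eqS p] by simp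
qed

lemma is_norm_sum:
  assumes N: "is_norm N" and fin: "finite A"
  shows "N (\<Sum>i\<in>A. f i) \<le> (\<Sum>i\<in>A. N (f i))"
  using fin
proof (induction A rule: finite_induct)
  case empty then show ?case using is_norm_zero[OF N] by simp
next
  case (insert x F)
  then show ?case using is_norm_add[OF N, of "f x" "sum f F"] by simp
qed

lemma is_norm_bound:
  fixes N :: "'a::euclidean_space \<Rightarrow> real"
  assumes N: "is_norm N"
  shows "N x \<le> (\<Sum>b\<in>Basis. N b) * norm x"
proof -
  have "N x = N (\<Sum>b\<in>Basis. inner x b *\<^sub>R b)" by (simp add: euclidean_representation)
  also have "\<dots> \<le> (\<Sum>b\<in>Basis. N (inner x b *\<^sub>R b))" by (rule is_norm_sum[OF N]) simp
  also have "\<dots> = (\<Sum>b\<in>Basis. \<bar>inner x b\<bar> * N b)" by (simp add: is_norm_scale[OF N])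
  also have "\<dots> \<le> (\<Sum>b\<in>Basis. norm x * N b)"
    by (intro sum_mono mult_right_mono Basis_le_norm is_norm_nonneg[OF N])
  also have "\<dots> = (\<Sum>b\<in>Basis. N b) * norm x" by (simp add: sum_distrib_left mult.commute)
  finally show ?thesis .
qed

lemma is_norm_triangle_diff:
  assumes N: "is_norm N"
  shows "N x \<le> N y + N (x - y)"
  using is_norm_add[OF N, of y "x - y"] by simp

lemma is_norm_minus:
  assumes N: "is_norm N"
  shows "N (- x) = N x"
  using is_norm_scale[OF N, of "-1" x] by simp

lemma is_norm_continuous:
  fixes N :: "'a::euclidean_space \<Rightarrow> real"
  assumes N: "is_norm N"
  shows "continuous_on UNIV N"
proof -
  let ?C = "\<Sum>b\<in>Basis. N b"
  have C: "?C \<ge> 0" by (intro sum_nonneg is_norm_nonneg[OF N])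
  have "?C-lipschitz_on UNIV N"
  proof (rule lipschitz_onI)
    fix x y :: 'a
    have a: "N x - N y \<le> N (x - y)" using is_norm_triangle_diff[OF N, of x y] by simp
    have b: "N y - N x \<le> N (x - y)"
      using is_norm_triangle_diff[OF N, of y x] is_norm_minus[OF N, of "x - y"] by simp
    have "dist (N x) (N y) \<le> N (x - y)" using a b by (simp add: dist_real_def)
    also have "\<dots> \<le> ?C * norm (x - y)" by (rule is_norm_bound[OF N])
    finally show "dist (N x) (N y) \<le> ?C * dist x y" by (simp add: dist_norm)
  qed (rule C)
  then show ?thesis by (rule lipschitz_on_continuous_on)
qed

lemma is_norm_convex:
  assumes N: "is_norm N" and t: "0 \<le> t" "t \<le> 1" and x: "N x \<le> 1" and y: "N y \<le> 1"
  shows "N ((1 - t) *\<^sub>R x + t *\<^sub>R y) \<le> 1"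
proof -
  have "N ((1 - t) *\<^sub>R x + t *\<^sub>R y) \<le> N ((1 - t) *\<^sub>R x) + N (t *\<^sub>R y)" by (rule is_norm_add[OF N])
  also have "\<dots> = (1 - t) * N x + t * N y" using t by (simp add: is_norm_scale[OF N])
  finally have "N ((1 - t) *\<^sub>R x + t *\<^sub>R y) \<le> (1 - t) * N x + t * N y" .
  also have "\<dots> \<le> (1 - t) * 1 + t * 1" using t x y by (intro add_mono mult_left_mono) auto
  finally show ?thesis by simp
qed

lemma half_cancel: "(Q::real) > 0 \<Longrightarrow> X / (2 * Q) * Q = X / 2"
  by simp

definition Sg :: "('a \<Rightarrow> real) \<Rightarrow> ('a \<times> real) set \<Rightarrow> real \<Rightarrow> ('a \<times> real) set" where
  "Sg N V \<sigma> = V \<inter> DDstar N \<inter> {p. \<sigma> * snd p > 0}"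

lemma Sg_mem: "p \<in> Sg N V \<sigma> \<longleftrightarrow> p \<in> V \<and> N (fst p) \<le> 1 \<and> \<bar>snd p\<bar> \<le> 1 \<and> \<sigma> * snd p > 0"
  by (cases p) (auto simp: Sg_def DDstar_def DD_def DD0_def)

lemma Sg_pos: "\<forall>q\<in>Sg N V \<sigma>. \<sigma> * snd q > 0"
  by (auto simp: Sg_mem)

lemma Sg_approach:
  fixes N :: "'a::euclidean_space \<Rightarrow> real"
  assumes N: "is_norm N" and V: "open V" and \<sigma>: "\<bar>\<sigma>\<bar> = 1"
  shows "approach (Sg N V \<sigma>)"
  unfolding approach_def
proof
  fix q assume q: "q \<in> Sg N V \<sigma>"
  obtain a b where qab: "q = (a, b)" by (cases q)
  have qV: "q \<in> V" and Na: "N a \<le> 1" and b1: "\<bar>b\<bar> \<le> 1" and sb: "\<sigma> * b > 0"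
    using q qab by (auto simp: Sg_mem)
  have s1: "\<sigma> = 1 \<or> \<sigma> = -1" using \<sigma> by (auto simp: abs_if split: if_splits)
  have sbb: "\<sigma> * b = \<bar>b\<bar>" using s1 sb by auto
  obtain \<epsilon> where \<epsilon>: "\<epsilon> > 0" "ball q \<epsilon> \<subseteq> V" using V qV open_contains_ball by blast
  let ?C = "\<Sum>b\<in>Basis. N b"
  have C: "?C \<ge> 0" by (intro sum_nonneg is_norm_nonneg[OF N])
  define r where "r = 1 / (?C + 1)"
  have r: "r > 0" "r \<le> 1" using C by (auto simp: r_def)
  define \<delta> where "\<delta> = min (1/2) (min (\<epsilon> / (2 * (norm q + 1))) (\<bar>b\<bar> / 4))"
  have bpos: "\<bar>b\<bar> > 0" using sb by auto
  have nq: "norm q + 1 > 0" by (smt (verit) norm_ge_zero)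
  have \<delta>: "\<delta> > 0" using \<epsilon> bpos nq by (simp add: \<delta>_def)
  have key: "\<forall>v t. norm v < r \<longrightarrow> 0 < t \<longrightarrow> t \<le> \<delta> \<longrightarrow> q + t *\<^sub>R (- q + v) \<in> Sg N V \<sigma>"
  proof (intro allI impI)
    fix v :: "'a \<times> real" and t :: real assume v: "norm v < r" and t0: "0 < t" and tl: "t \<le> \<delta>"
    obtain v1 v2 where vv: "v = (v1, v2)" by (cases v)
    have t1: "t \<le> 1/2" using tl min.cobounded1 order_trans unfolding \<delta>_def by blast
    have eq: "q + t *\<^sub>R (- q + v) = ((1 - t) *\<^sub>R a + t *\<^sub>R v1, (1 - t) * b + t * v2)"
      using qab vv by (simp add: algebra_simps)
    have nv1: "norm v1 \<le> norm v" using vv by (simp add: norm_Pair)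
    have nv2: "\<bar>v2\<bar> \<le> norm v" using vv by (simp add: norm_Pair)
    have Nv1: "N v1 \<le> 1"
    proof -
      have "N v1 \<le> ?C * norm v1" by (rule is_norm_bound[OF N])
      also have "\<dots> \<le> ?C * r" using nv1 v C by (intro mult_left_mono) auto
      also have "\<dots> \<le> 1" using C by (simp add: r_def)
      finally show ?thesis .
    qed
    have v21: "\<bar>v2\<bar> \<le> 1" using nv2 v r by simp
    have inV: "q + t *\<^sub>R (- q + v) \<in> V"
    proof -
      have "norm (t *\<^sub>R (- q + v)) \<le> t * (norm q + norm v)"
        using t0 norm_triangle_ineq[of "-q" v] by (simp add: mult_left_mono)
      also have "\<dots> \<le> t * (norm q + 1)" using v r t0 by (intro mult_left_mono) auto
      also have "\<dots> \<le> \<epsilon> / (2 * (norm q + 1)) * (norm q + 1)"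
        using tl nq by (intro mult_right_mono) (auto simp: \<delta>_def)
      also have "\<dots> = \<epsilon> / 2" by (rule half_cancel[OF nq])
      also have "\<dots> < \<epsilon>" using \<epsilon> by simp
      finally have "dist q (q + t *\<^sub>R (- q + v)) < \<epsilon>" by (simp add: dist_norm)
      then show ?thesis using \<epsilon> by auto
    qed
    have ND: "N ((1 - t) *\<^sub>R a + t *\<^sub>R v1) \<le> 1"
      by (rule is_norm_convex[OF N]) (use t0 t1 Na Nv1 in auto)
    have yb: "\<bar>(1 - t) * b + t * v2\<bar> \<le> 1"
    proof -
      have "\<bar>(1 - t) * b + t * v2\<bar> \<le> (1 - t) * \<bar>b\<bar> + t * \<bar>v2\<bar>"
        using t0 t1 abs_triangle_ineq[of "(1 - t) * b" "t * v2"] by (simp add: abs_mult)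
      also have "\<dots> \<le> (1 - t) * 1 + t * 1"
      proof -
        have "(1 - t) * \<bar>b\<bar> \<le> (1 - t) * 1" using t1 b1 by (intro mult_left_mono) auto
        moreover have "t * \<bar>v2\<bar> \<le> t * 1" using t0 v21 by (intro mult_left_mono) auto
        ultimately show ?thesis by linarith
      qed
      finally show ?thesis by simp
    qed
    have ys: "\<sigma> * ((1 - t) * b + t * v2) > 0"
    proof -
      have "\<sigma> * ((1 - t) * b + t * v2) = (1 - t) * \<bar>b\<bar> + t * (\<sigma> * v2)"
        using sbb by (simp add: algebra_simps)
      moreover have "\<bar>\<sigma> * v2\<bar> \<le> 1" using \<sigma> v21 by (simp add: abs_mult)
      moreover have "t \<le> \<bar>b\<bar> / 4" using tl by (simp add: \<delta>_def)
      moreover have "t * (\<sigma> * v2) \<ge> - t"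
      proof -
        have "\<sigma> * v2 \<ge> -1" using \<open>\<bar>\<sigma> * v2\<bar> \<le> 1\<close> by linarith
        then have "t * (\<sigma> * v2) \<ge> t * (-1)" using t0 by (intro mult_left_mono) auto
        then show ?thesis by simp
      qed
      moreover have "(1 - t) * \<bar>b\<bar> \<ge> \<bar>b\<bar> / 2"
      proof -
        have "t * \<bar>b\<bar> \<le> (1/2) * \<bar>b\<bar>" using t1 by (intro mult_right_mono) auto
        then show ?thesis by (simp add: algebra_simps)
      qed
      ultimately show ?thesis using bpos by linarith
    qed
    have "q + t *\<^sub>R (- q + v) \<in> Sg N V \<sigma>"
      unfolding Sg_mem using inV ND yb ys eq by simp
    then show "q + t *\<^sub>R (- q + v) \<in> Sg N V \<sigma>" .
  qed
  show "\<exists>w r \<delta>. r > 0 \<and> \<delta> > 0 \<and> (\<forall>v t. norm v < r \<longrightarrow> 0 < t \<longrightarrow> t \<le> \<delta> \<longrightarrow> q + t *\<^sub>R (w + v) \<in> Sg N V \<sigma>)"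
    using key r \<delta> by blast
qed

lemma Sg_dense:
  fixes N :: "'a::euclidean_space \<Rightarrow> real"
  assumes N: "is_norm N" and V: "open V" and \<sigma>: "\<bar>\<sigma>\<bar> = 1"
  shows "Sg N V \<sigma> \<subseteq> closure (interior (Sg N V \<sigma>))"
proof
  fix q assume q: "q \<in> Sg N V \<sigma>"
  obtain a b where qab: "q = (a, b)" by (cases q)
  have qV: "q \<in> V" and Na: "N a \<le> 1" and b1: "\<bar>b\<bar> \<le> 1" and sb: "\<sigma> * b > 0"
    using q qab by (auto simp: Sg_mem)
  obtain \<epsilon> where \<epsilon>: "\<epsilon> > 0" "ball q \<epsilon> \<subseteq> V" using V qV open_contains_ball by blast
  let ?O = "V \<inter> {p. N (fst p) < 1} \<inter> {p. \<bar>snd p\<bar> < 1} \<inter> {p. \<sigma> * snd p > 0}"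
  have cN: "continuous_on UNIV (\<lambda>p::'a \<times> real. N (fst p))"
    using continuous_on_compose2[OF is_norm_continuous[OF N] continuous_on_fst[OF continuous_on_id]]
    by auto
  have oO: "open ?O"
  proof -
    have "open {p::'a \<times> real. N (fst p) < 1}"
      using open_Collect_less[OF cN continuous_on_const] by simp
    moreover have "open {p::'a \<times> real. \<bar>snd p\<bar> < 1}"
      by (intro open_Collect_less continuous_intros)
    moreover have "open {p::'a \<times> real. \<sigma> * snd p > 0}"
      by (intro open_Collect_less continuous_intros)
    ultimately show ?thesis using V by blast
  qed
  have OS: "?O \<subseteq> Sg N V \<sigma>" by (auto simp: Sg_mem)
  have Oint: "?O \<subseteq> interior (Sg N V \<sigma>)" using interior_maximal[OF OS oO] .
  have nq: "norm q + 1 > 0" by (smt (verit) norm_ge_zero)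
  show "q \<in> closure (interior (Sg N V \<sigma>))"
    unfolding closure_approachable
  proof (intro allI impI)
    fix e :: real assume e: "e > 0"
    define t where "t = min (1/2) (min e \<epsilon> / (2 * (norm q + 1)))"
    have t0: "t > 0" using e \<epsilon> nq by (simp add: t_def)
    have t1: "t \<le> 1/2" unfolding t_def by (rule min.cobounded1)
    have dq: "dist ((1 - t) *\<^sub>R q) q < min e \<epsilon>"
    proof -
      have "dist ((1 - t) *\<^sub>R q) q = t * norm q" using t0 by (simp add: dist_norm algebra_simps)
      also have "\<dots> \<le> min e \<epsilon> / (2 * (norm q + 1)) * (norm q + 1)"
        using t0 by (intro mult_mono) (auto simp: t_def)
      also have "\<dots> = min e \<epsilon> / 2" by (rule half_cancel[OF nq])
      also have "\<dots> < min e \<epsilon>" using e \<epsilon> by (simp add: min_def)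
      finally show ?thesis .
    qed
    have inO: "(1 - t) *\<^sub>R q \<in> ?O"
    proof -
      have "(1 - t) *\<^sub>R q \<in> V" using dq \<epsilon> by (auto simp: dist_commute)
      moreover have "N (fst ((1 - t) *\<^sub>R q)) < 1"
      proof -
        have "N (fst ((1 - t) *\<^sub>R q)) = (1 - t) * N a" using qab t1 by (simp add: is_norm_scale[OF N])
        also have "\<dots> \<le> (1 - t) * 1" using Na t1 by (intro mult_left_mono) auto
        finally show ?thesis using t0 by simp
      qed
      moreover have "\<bar>snd ((1 - t) *\<^sub>R q)\<bar> < 1"
      proof -
        have "\<bar>snd ((1 - t) *\<^sub>R q)\<bar> = (1 - t) * \<bar>b\<bar>" using qab t1 by (simp add: abs_mult)
        also have "\<dots> \<le> (1 - t) * 1" using b1 t1 by (intro mult_left_mono) auto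
        finally show ?thesis using t0 by simp
      qed
      moreover have "\<sigma> * snd ((1 - t) *\<^sub>R q) > 0"
      proof -
        have e1: "\<sigma> * snd ((1 - t) *\<^sub>R q) = (1 - t) * (\<sigma> * b)" unfolding qab by simp
        have e2: "(1 - t) * (\<sigma> * b) > 0" using t1 sb by (intro mult_pos_pos[of "1 - t" "\<sigma> * b"]) auto
        show ?thesis using e1 e2 by linarith
      qed
      ultimately show ?thesis by simp
    qed
    show "\<exists>y\<in>interior (Sg N V \<sigma>). dist y q < e"
      using inO Oint dq by (intro bexI[of _ "(1 - t) *\<^sub>R q"]) auto
  qed
qed

lemma prod_list_filter_split:
  fixes f :: "'b \<Rightarrow> real"
  shows "prod_list (map f xs) = prod_list (map f (filter P xs)) * prod_list (map f (filter (\<lambda>e. \<not> P e) xs))"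
  by (induction xs) (auto simp: algebra_simps)

lemma filter_all_eq_replicate:
  assumes "\<forall>e\<in>set xs. e = c"
  shows "xs = replicate (length xs) c"
  using assms by (induction xs) auto

lemma phi_bound:
  fixes N :: "'a::euclidean_space \<Rightarrow> real" and \<phi> :: "'a \<times> real \<Rightarrow> 'w::real_normed_vector"
  assumes N: "is_norm N" and nrm: "is_norm nrm" and V: "open V" and \<sigma>: "\<bar>\<sigma>\<bar> = 1"
    and sm: "smooth (k + 1) \<phi> (Sg N V \<sigma>)" and \<gamma>: "\<gamma> \<ge> 0" and K: "K > 0"
    and HB: "\<forall>l m hs x y. l + m \<le> k + 1 \<longrightarrow> length hs = l \<longrightarrow> (x, y) \<in> Sg N V \<sigma> \<longrightarrow>
        nrm (hderiv (Sg N V \<sigma>) (l + m) \<phi> (x, y) (map (\<lambda>h. (h, 0)) hs @ replicate m (0, 1)))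
          \<le> K * \<bar>y\<bar> powr (\<gamma> - real m) * prod_list (map N hs)"
    and p: "p \<in> Sg N V \<sigma>" and l: "length hs = j" and jk: "j \<le> k"
  shows "nrm (hderiv (Sg N V \<sigma>) j \<phi> p hs) \<le> 2 ^ j * (K * \<bar>snd p\<bar> powr (- real j)) * prod_list (map (prod_norm N) hs)"
proof -
  let ?S = "Sg N V \<sigma>"
  obtain x y where pxy: "p = (x, y)" by (cases p)
  have y: "\<bar>y\<bar> > 0" "\<bar>y\<bar> \<le> 1" using p pxy by (auto simp: Sg_mem)
  have ap: "approach ?S" by (rule Sg_approach[OF N V \<sigma>])
  have dense: "?S \<subseteq> closure (interior ?S)" by (rule Sg_dense[OF N V \<sigma>])
  have smj: "smooth j \<phi> ?S" by (rule smooth_mono[OF sm]) (use jk in simp)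
  have smj1: "smooth (j + 1) \<phi> ?S" by (rule smooth_mono[OF sm]) (use jk in simp)
  have B0: "K * \<bar>y\<bar> powr (- real j) \<ge> 0" using K by simp
  have pure: "nrm (hderiv ?S j \<phi> p xs) \<le> (K * \<bar>y\<bar> powr (- real j)) * prod_list (map (prod_norm N) xs)"
    if lx: "length xs = j" and pu: "\<forall>e\<in>set xs. pure_dir e" for xs
  proof -
    let ?P = "\<lambda>e::'a \<times> real. snd e = 0"
    let ?A = "filter ?P xs" and ?B = "filter (\<lambda>e. \<not> ?P e) xs"
    have ms: "mset xs = mset (?A @ ?B)" by simp
    have Bc: "\<forall>e\<in>set ?B. e = (0, 1)" using pu by (auto simp: pure_dir_def)
    have Beq: "?B = replicate (length ?B) (0, 1)" by (rule filter_all_eq_replicate[OF Bc])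
    have Aeq: "?A = map (\<lambda>h. (h, 0)) (map fst ?A)"
      by (induction xs) auto
    have lens: "length (map fst ?A) + length ?B = j"
      using lx by (simp add: sum_length_filter_compl)
    have perm: "hderiv ?S j \<phi> p xs = hderiv ?S j \<phi> p (?A @ ?B)"
      by (rule hderiv_perm[OF smj1 dense p ms lx])
    also have "\<dots> = hderiv ?S (length (map fst ?A) + length ?B) \<phi> (x, y)
        (map (\<lambda>h. (h, 0)) (map fst ?A) @ replicate (length ?B) (0, 1))"
      using lens pxy Aeq Beq by simp
    finally have eqh: "hderiv ?S j \<phi> p xs = hderiv ?S (length (map fst ?A) + length ?B) \<phi> (x, y)
        (map (\<lambda>h. (h, 0)) (map fst ?A) @ replicate (length ?B) (0, 1))" .
    have "nrm (hderiv ?S j \<phi> p xs) \<le> K * \<bar>y\<bar> powr (\<gamma> - real (length ?B)) * prod_list (map N (map fst ?A))"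
      unfolding eqh by (rule HB[rule_format]) (use lens jk p pxy in auto)
    also have "\<dots> \<le> K * \<bar>y\<bar> powr (- real j) * prod_list (map N (map fst ?A))"
    proof -
      have "\<bar>y\<bar> powr (\<gamma> - real (length ?B)) \<le> \<bar>y\<bar> powr (- real j)"
        using lens \<gamma> y by (intro powr_mono') auto
      moreover have "prod_list (map N (map fst ?A)) \<ge> 0"
        by (rule prod_list_nonneg_map[OF is_norm_nonneg[OF N]])
      ultimately show ?thesis using K by (intro mult_right_mono mult_left_mono) auto
    qed
    also have "prod_list (map N (map fst ?A)) = prod_list (map (prod_norm N) xs)"
    proof -
      have a: "prod_list (map (prod_norm N) ?A) = prod_list (map N (map fst ?A))"
        by (induction xs) (auto simp: prod_norm_def is_norm_nonneg[OF N])
      have b: "prod_list (map (prod_norm N) ?B) = 1"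
        by (subst Beq) (simp add: prod_norm_def is_norm_zero[OF N])
      show ?thesis using prod_list_filter_split[of "prod_norm N" xs ?P] a b by simp
    qed
    finally show ?thesis using pxy by simp
  qed
  have lin: "\<And>xs i a b c. length xs = j \<Longrightarrow> i < j \<Longrightarrow>
      hderiv ?S j \<phi> p (xs[i := a + c *\<^sub>R b]) = hderiv ?S j \<phi> p (xs[i := a]) + c *\<^sub>R hderiv ?S j \<phi> p (xs[i := b])"
    using hderiv_lin_slot[OF ap smj _ _ p] by blast
  have "nrm (hderiv ?S j \<phi> p hs) \<le> 2 ^ j * (K * \<bar>y\<bar> powr (- real j)) * prod_list (map (prod_norm N) hs)"
    by (rule multilinear_expand[of j "hderiv ?S j \<phi> p", OF lin nrm N B0 pure]) (use l in auto)
  then show ?thesis using pxy by simp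
qed

lemma is_norm_sum_list:
  assumes nrm: "is_norm nrm"
  shows "nrm (sum_list (map f L)) \<le> sum_list (map (\<lambda>x. nrm (f x)) L)"
proof (induction L)
  case Nil then show ?case using is_norm_zero[OF nrm] by simp
next
  case (Cons a L)
  then show ?case using is_norm_add[OF nrm, of "f a" "sum_list (map f L)"] by simp
qed

lemma prod_sigma_bound:
  assumes N: "is_norm N" and \<sigma>: "\<bar>\<sigma>\<bar> = 1"
  shows "\<bar>prod_list (map (\<lambda>e. \<sigma> * snd e) xs)\<bar> \<le> prod_list (map (prod_norm N) xs)"
proof (induction xs)
  case Nil then show ?case by simp
next
  case (Cons a xs)
  have "\<bar>\<sigma> * snd a\<bar> \<le> prod_norm N a" using \<sigma> by (simp add: abs_mult prod_norm_def)
  moreover have "0 \<le> \<bar>prod_list (map (\<lambda>e. \<sigma> * snd e) xs)\<bar>" by simp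
  ultimately show ?case using Cons by (simp add: abs_mult mult_mono prod_norm_nonneg[OF N])
qed

lemma main_bound:
  fixes N :: "'a::euclidean_space \<Rightarrow> real" and \<phi> :: "'a \<times> real \<Rightarrow> 'w::real_normed_vector"
    and c0 B0 :: 'w
  assumes N: "is_norm N" and nrm: "is_norm nrm" and V: "open V" and \<sigma>: "\<bar>\<sigma>\<bar> = 1"
    and k: "k \<ge> 1"
    and sm: "smooth (k + 1) \<phi> (Sg N V \<sigma>)" and \<gamma>: "\<gamma> \<ge> 0" and K: "K > 0"
    and HB: "\<forall>l m hs x y. l + m \<le> k + 1 \<longrightarrow> length hs = l \<longrightarrow> (x, y) \<in> Sg N V \<sigma> \<longrightarrow>
        nrm (hderiv (Sg N V \<sigma>) (l + m) \<phi> (x, y) (map (\<lambda>h. (h, 0)) hs @ replicate m (0, 1)))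
          \<le> K * \<bar>y\<bar> powr (\<gamma> - real m) * prod_list (map N hs)"
  shows "\<exists>c>0. \<forall>p\<in>Sg N V \<sigma>. \<forall>hs. length hs = k \<longrightarrow>
     nrm (hderiv (Sg N V \<sigma>) k (\<lambda>q. c0 + (\<sigma> * snd q) powr \<alpha> *\<^sub>R (B0 + \<phi> q)) p hs)
       \<le> c * \<bar>snd p\<bar> powr (\<alpha> - real k) * prod_list (map (prod_norm N) hs)"
proof -
  let ?S = "Sg N V \<sigma>"
  let ?P = "\<lambda>q. (\<sigma> * snd q) powr \<alpha>"
  let ?f2 = "\<lambda>q. B0 + \<phi> q"
  have ap: "approach ?S" by (rule Sg_approach[OF N V \<sigma>])
  have pos: "\<forall>q\<in>?S. \<sigma> * snd q > 0" by (rule Sg_pos)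
  have smk: "smooth k \<phi> ?S" by (rule smooth_mono[OF sm]) simp
  have smP: "smooth k ?P ?S" by (rule smooth_powr[OF ap pos])
  have smf2: "smooth k ?f2 ?S" by (rule smooth_const_add[OF ap smk])
  have smPf: "smooth k (\<lambda>q. ?P q *\<^sub>R ?f2 q) ?S" by (rule smooth_scaleR[OF ap smP smf2])
  define A where "A = (\<Sum>j\<le>k. \<bar>cpow \<alpha> j\<bar>)"
  define E where "E = nrm B0 + 2 ^ k * K"
  have A0: "A \<ge> 0" unfolding A_def by (intro sum_nonneg) auto
  have E0: "E \<ge> 0" unfolding E_def using is_norm_nonneg[OF nrm] K by (simp add: add_nonneg_nonneg)
  define c where "c = 2 ^ k * A * E + 1"
  have c0': "c > 0" using A0 E0 unfolding c_def by (simp add: add_nonneg_pos)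
  show ?thesis
  proof (intro exI[of _ c] conjI ballI allI impI c0')
    fix p and hs :: "('a \<times> real) list"
    assume p: "p \<in> ?S" and l: "length hs = k"
    obtain x y where pxy: "p = (x, y)" by (cases p)
    have y: "\<bar>y\<bar> > 0" "\<bar>y\<bar> \<le> 1" "\<sigma> * y > 0" using p pxy by (auto simp: Sg_mem)
    have sy: "\<sigma> * y = \<bar>y\<bar>"
    proof -
      have "\<sigma> = 1 \<or> \<sigma> = -1" using \<sigma> by (auto simp: abs_if split: if_splits)
      then show ?thesis using y(3) by auto
    qed
    obtain k' where kk: "k = Suc k'" using k by (cases k) auto
    have smk': "smooth (Suc k') (\<lambda>q. ?P q *\<^sub>R ?f2 q) ?S" using smPf kk by simp
    have step1: "hderiv ?S k (\<lambda>q. c0 + ?P q *\<^sub>R ?f2 q) p hs = hderiv ?S k (\<lambda>q. ?P q *\<^sub>R ?f2 q) p hs"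
      using hderiv_const_add[OF ap smk' p] kk by simp
    have step2: "hderiv ?S k (\<lambda>q. ?P q *\<^sub>R ?f2 q) p hs =
      sum_list (map (\<lambda>x. hderiv ?S (length (fst x)) ?P p (fst x) *\<^sub>R hderiv ?S (length (snd x)) ?f2 p (snd x)) (splits hs))"
      using leibniz[OF ap smP smf2, of hs p] l p by simp
    let ?B = "A * E * \<bar>y\<bar> powr (\<alpha> - real k) * prod_list (map (prod_norm N) hs)"
    have tm: "nrm (hderiv ?S (length (fst z)) ?P p (fst z) *\<^sub>R hderiv ?S (length (snd z)) ?f2 p (snd z)) \<le> ?B"
      if z: "z \<in> set (splits hs)" for z
    proof -
      let ?a = "length (fst z)" and ?b = "length (snd z)"
      have ab: "?a + ?b = k" using splits_len[OF z] l by simp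
      have Pbound: "\<bar>hderiv ?S ?a ?P p (fst z)\<bar> \<le> A * prod_list (map (prod_norm N) (fst z)) * \<bar>y\<bar> powr (\<alpha> - real ?a)"
      proof -
        have "hderiv ?S ?a ?P p (fst z) = (cpow \<alpha> ?a * prod_list (map (\<lambda>e. \<sigma> * snd e) (fst z))) * (\<sigma> * snd p) powr (\<alpha> - real ?a)"
          by (rule hderiv_powr[OF ap pos p])
        then have "\<bar>hderiv ?S ?a ?P p (fst z)\<bar> = \<bar>cpow \<alpha> ?a\<bar> * \<bar>prod_list (map (\<lambda>e. \<sigma> * snd e) (fst z))\<bar> * \<bar>y\<bar> powr (\<alpha> - real ?a)"
          using pxy sy by (simp add: abs_mult)
        also have "\<dots> \<le> A * prod_list (map (prod_norm N) (fst z)) * \<bar>y\<bar> powr (\<alpha> - real ?a)"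
        proof -
          have "\<bar>cpow \<alpha> ?a\<bar> \<le> A" unfolding A_def
            by (rule member_le_sum[of ?a "{..k}" "\<lambda>j. \<bar>cpow \<alpha> j\<bar>"]) (use ab in auto)
          moreover have "\<bar>prod_list (map (\<lambda>e. \<sigma> * snd e) (fst z))\<bar> \<le> prod_list (map (prod_norm N) (fst z))"
            by (rule prod_sigma_bound[OF N \<sigma>])
          ultimately have "\<bar>cpow \<alpha> ?a\<bar> * \<bar>prod_list (map (\<lambda>e. \<sigma> * snd e) (fst z))\<bar> \<le> A * prod_list (map (prod_norm N) (fst z))"
            using A0 by (intro mult_mono) auto
          then show ?thesis by (rule mult_right_mono) simp
        qed
        finally show ?thesis .
      qed
      have fbound: "nrm (hderiv ?S ?b ?f2 p (snd z)) \<le> E * \<bar>y\<bar> powr (- real ?b) * prod_list (map (prod_norm N) (snd z))"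
      proof (cases ?b)
        case 0
        then have sz: "snd z = []" by simp
        have "nrm (\<phi> p) \<le> 2 ^ 0 * (K * \<bar>snd p\<bar> powr (- real 0)) * prod_list (map (prod_norm N) [])"
          using phi_bound[OF N nrm V \<sigma> sm \<gamma> K HB p, of "[]" 0] by simp
        then have "nrm (\<phi> p) \<le> K" using y pxy by simp
        moreover have "K \<le> 2 ^ k * K" using K by simp
        ultimately have "nrm (B0 + \<phi> p) \<le> E"
          using is_norm_add[OF nrm, of B0 "\<phi> p"] unfolding E_def by linarith
        then show ?thesis using sz y by simp
      next
        case (Suc b')
        have smb: "smooth (Suc b') \<phi> ?S" by (rule smooth_mono[OF sm]) (use ab Suc in simp)
        have "hderiv ?S ?b ?f2 p (snd z) = hderiv ?S ?b \<phi> p (snd z)"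
          using hderiv_const_add[OF ap smb p] Suc by simp
        moreover have "nrm (hderiv ?S ?b \<phi> p (snd z)) \<le> 2 ^ ?b * (K * \<bar>snd p\<bar> powr (- real ?b)) * prod_list (map (prod_norm N) (snd z))"
          by (rule phi_bound[OF N nrm V \<sigma> sm \<gamma> K HB p refl]) (use ab in simp)
        moreover have "2 ^ ?b * K \<le> E"
        proof -
          have "(2::real) ^ ?b \<le> 2 ^ k" using ab by (intro power_increasing) auto
          then have "2 ^ ?b * K \<le> 2 ^ k * K" using K by simp
          then show ?thesis unfolding E_def using is_norm_nonneg[OF nrm, of B0] by linarith
        qed
        moreover have "prod_list (map (prod_norm N) (snd z)) \<ge> 0"
          by (rule prod_list_nonneg_map[OF prod_norm_nonneg[OF N]])
        ultimately show ?thesis using pxy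
        proof -
          assume e1: "hderiv ?S ?b ?f2 p (snd z) = hderiv ?S ?b \<phi> p (snd z)"
            and e2: "nrm (hderiv ?S ?b \<phi> p (snd z)) \<le> 2 ^ ?b * (K * \<bar>snd p\<bar> powr (- real ?b)) * prod_list (map (prod_norm N) (snd z))"
            and e3: "2 ^ ?b * K \<le> E" and e4: "prod_list (map (prod_norm N) (snd z)) \<ge> 0" and e5: "p = (x, y)"
          let ?Y = "\<bar>y\<bar> powr (- real ?b) * prod_list (map (prod_norm N) (snd z))"
          have Y0: "?Y \<ge> 0" using e4 by simp
          have "nrm (hderiv ?S ?b ?f2 p (snd z)) \<le> (2 ^ ?b * K) * ?Y"
            using e1 e2 e5 by (simp add: algebra_simps)
          also have "\<dots> \<le> E * ?Y" using e3 Y0 by (rule mult_right_mono)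
          finally show ?thesis by (simp add: algebra_simps)
        qed
      qed
      have "nrm (hderiv ?S ?a ?P p (fst z) *\<^sub>R hderiv ?S ?b ?f2 p (snd z))
          = \<bar>hderiv ?S ?a ?P p (fst z)\<bar> * nrm (hderiv ?S ?b ?f2 p (snd z))"
        by (rule is_norm_scale[OF nrm])
      also have "\<dots> \<le> (A * prod_list (map (prod_norm N) (fst z)) * \<bar>y\<bar> powr (\<alpha> - real ?a)) *
                       (E * \<bar>y\<bar> powr (- real ?b) * prod_list (map (prod_norm N) (snd z)))"
      proof (rule mult_mono[OF Pbound fbound])
        show "0 \<le> A * prod_list (map (prod_norm N) (fst z)) * \<bar>y\<bar> powr (\<alpha> - real ?a)"
          using A0 prod_list_nonneg_map[OF prod_norm_nonneg[OF N], where xs="fst z"] by simp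
        show "0 \<le> nrm (hderiv ?S ?b ?f2 p (snd z))" by (rule is_norm_nonneg[OF nrm])
      qed
      also have "\<dots> = A * E * (\<bar>y\<bar> powr (\<alpha> - real ?a) * \<bar>y\<bar> powr (- real ?b)) *
           (prod_list (map (prod_norm N) (fst z)) * prod_list (map (prod_norm N) (snd z)))"
        by (simp add: algebra_simps)
      also have "\<dots> = ?B"
      proof -
        have "\<bar>y\<bar> powr (\<alpha> - real ?a) * \<bar>y\<bar> powr (- real ?b) = \<bar>y\<bar> powr (\<alpha> - real k)"
        proof -
          have rab: "real k = real ?a + real ?b" using ab by (metis of_nat_add)
          show ?thesis by (simp add: powr_add[symmetric] algebra_simps rab)
        qed
        then show ?thesis using splits_prod[OF z, of "prod_norm N"] by simp
      qed
      finally show ?thesis .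
    qed
    have "nrm (hderiv ?S k (\<lambda>q. c0 + ?P q *\<^sub>R ?f2 q) p hs) =
          nrm (sum_list (map (\<lambda>x. hderiv ?S (length (fst x)) ?P p (fst x) *\<^sub>R hderiv ?S (length (snd x)) ?f2 p (snd x)) (splits hs)))"
      using step1 step2 by simp
    also have "\<dots> \<le> sum_list (map (\<lambda>x. nrm (hderiv ?S (length (fst x)) ?P p (fst x) *\<^sub>R hderiv ?S (length (snd x)) ?f2 p (snd x))) (splits hs))"
      by (rule is_norm_sum_list[OF nrm])
    also have "\<dots> \<le> sum_list (map (\<lambda>x. ?B) (splits hs))"
      by (rule sum_list_mono) (rule tm)
    also have "\<dots> = 2 ^ k * ?B" using l by (simp add: map_replicate_const sum_list_replicate splits_length)
    also have "\<dots> \<le> c * \<bar>y\<bar> powr (\<alpha> - real k) * prod_list (map (prod_norm N) hs)"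
    proof -
      have "0 \<le> \<bar>y\<bar> powr (\<alpha> - real k) * prod_list (map (prod_norm N) hs)"
        by (intro mult_nonneg_nonneg powr_ge_zero prod_list_nonneg_map prod_norm_nonneg[OF N])
      then have "(2 ^ k * A * E) * (\<bar>y\<bar> powr (\<alpha> - real k) * prod_list (map (prod_norm N) hs))
          \<le> c * (\<bar>y\<bar> powr (\<alpha> - real k) * prod_list (map (prod_norm N) hs))"
        unfolding c_def by (intro mult_right_mono) auto
      then show ?thesis by (simp add: algebra_simps)
    qed
    finally show "nrm (hderiv ?S k (\<lambda>q. c0 + ?P q *\<^sub>R ?f2 q) p hs)
        \<le> c * \<bar>snd p\<bar> powr (\<alpha> - real k) * prod_list (map (prod_norm N) hs)" using pxy by simp
  qed
qed

lemma sign_case: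
  fixes N :: "'a::euclidean_space \<Rightarrow> real"
    and F :: "'a \<times> real \<Rightarrow> 'a" and G :: "'a \<times> real \<Rightarrow> real"
    and \<phi> :: "'a \<times> real \<Rightarrow> 'a" and \<psi> :: "'a \<times> real \<Rightarrow> real"
  assumes N: "is_norm N" and V: "open V" and \<sigma>: "\<bar>\<sigma>\<bar> = 1" and k: "k \<ge> 1"
    and \<gamma>: "\<gamma> \<ge> 0" and K: "K > 0"
    and sm\<phi>: "smooth (k + 1) \<phi> (Sg N V \<sigma>)" and sm\<psi>: "smooth (k + 1) \<psi> (Sg N V \<sigma>)"
    and HB\<phi>: "\<forall>l m hs x y. l + m \<le> k + 1 \<longrightarrow> length hs = l \<longrightarrow> (x, y) \<in> Sg N V \<sigma> \<longrightarrow>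
        N (hderiv (Sg N V \<sigma>) (l + m) \<phi> (x, y) (map (\<lambda>h. (h, 0)) hs @ replicate m (0, 1)))
          \<le> K * \<bar>y\<bar> powr (\<gamma> - real m) * prod_list (map N hs)"
    and HB\<psi>: "\<forall>l m hs x y. l + m \<le> k + 1 \<longrightarrow> length hs = l \<longrightarrow> (x, y) \<in> Sg N V \<sigma> \<longrightarrow>
        \<bar>hderiv (Sg N V \<sigma>) (l + m) \<psi> (x, y) (map (\<lambda>h. (h, 0)) hs @ replicate m (0, 1))\<bar>
          \<le> K * \<bar>y\<bar> powr (\<gamma> - real m) * prod_list (map N hs)"
    and FF: "\<forall>q\<in>Sg N V \<sigma>. F q = x0 + \<bar>snd q\<bar> powr \<alpha> *\<^sub>R (B0 + \<phi> q)"
    and GG: "\<forall>q\<in>Sg N V \<sigma>. G q = y0 + \<bar>snd q\<bar> powr \<alpha> * (A0 + \<psi> q)"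
  shows "\<exists>c>0. \<forall>p\<in>Sg N V \<sigma>. \<forall>hs. length hs = k \<longrightarrow>
     prod_norm N (hderiv (DDstar N) k (\<lambda>p. (F p, G p)) p hs)
       \<le> c * \<bar>snd p\<bar> powr (\<alpha> - real k) * prod_list (map (prod_norm N) hs)"
proof -
  let ?S = "Sg N V \<sigma>"
  let ?TF = "\<lambda>q. x0 + (\<sigma> * snd q) powr \<alpha> *\<^sub>R (B0 + \<phi> q)"
  let ?TG = "\<lambda>q. y0 + (\<sigma> * snd q) powr \<alpha> *\<^sub>R (A0 + \<psi> q)"
  obtain c1 where c1: "c1 > 0" and C1: "\<forall>p\<in>?S. \<forall>hs. length hs = k \<longrightarrow>
     N (hderiv ?S k ?TF p hs) \<le> c1 * \<bar>snd p\<bar> powr (\<alpha> - real k) * prod_list (map (prod_norm N) hs)"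
    using main_bound[OF N N V \<sigma> k sm\<phi> \<gamma> K HB\<phi>, of x0 \<alpha> B0] by blast
  obtain c2 where c2: "c2 > 0" and C2: "\<forall>p\<in>?S. \<forall>hs. length hs = k \<longrightarrow>
     \<bar>hderiv ?S k ?TG p hs\<bar> \<le> c2 * \<bar>snd p\<bar> powr (\<alpha> - real k) * prod_list (map (prod_norm N) hs)"
    using main_bound[OF N is_norm_abs V \<sigma> k sm\<psi> \<gamma> K HB\<psi>, of y0 \<alpha> A0] by blast
  have ap: "approach ?S" by (rule Sg_approach[OF N V \<sigma>])
  have pos: "\<forall>q\<in>?S. \<sigma> * snd q > 0" by (rule Sg_pos)
  have smP: "smooth k (\<lambda>q. (\<sigma> * snd q) powr \<alpha>) ?S" by (rule smooth_powr[OF ap pos])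
  have smF: "smooth k ?TF ?S"
    by (intro smooth_const_add[OF ap] smooth_scaleR[OF ap smP] smooth_mono[OF sm\<phi>]) simp
  have smG: "smooth k ?TG ?S"
    by (intro smooth_const_add[OF ap] smooth_scaleR[OF ap smP] smooth_mono[OF sm\<psi>]) simp
  have sabs: "\<sigma> * snd q = \<bar>snd q\<bar>" if "q \<in> ?S" for q
  proof -
    have "\<sigma> = 1 \<or> \<sigma> = -1" using \<sigma> by (auto simp: abs_if split: if_splits)
    then show ?thesis using pos that by auto
  qed
  let ?W = "V \<inter> {p. \<sigma> * snd p > 0}"
  have oW: "open ?W" using V by (intro open_Int open_Collect_less continuous_intros) auto
  have SW: "DDstar N \<inter> ?W = ?S \<inter> ?W" by (auto simp: Sg_def)
  have SWS: "DDstar N \<inter> ?W = ?S" by (auto simp: Sg_def)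
  have agree: "\<forall>q\<in>DDstar N \<inter> ?W. (F q, G q) = (?TF q, ?TG q)"
    using FF GG sabs SWS by auto
  show ?thesis
  proof (intro exI[of _ "c1 + c2"] conjI ballI allI impI)
    show "c1 + c2 > 0" using c1 c2 by simp
    fix p and hs :: "('a \<times> real) list"
    assume p: "p \<in> ?S" and l: "length hs = k"
    have pW: "p \<in> DDstar N \<inter> ?W" using p SWS by simp
    have "hderiv (DDstar N) k (\<lambda>p. (F p, G p)) p hs = hderiv ?S k (\<lambda>q. (?TF q, ?TG q)) p hs"
      by (rule hderiv_local[OF oW SW agree pW])
    also have "\<dots> = (hderiv ?S k ?TF p hs, hderiv ?S k ?TG p hs)"
      by (rule hderiv_pair[OF ap smF smG l p])
    finally have eq: "hderiv (DDstar N) k (\<lambda>p. (F p, G p)) p hs = (hderiv ?S k ?TF p hs, hderiv ?S k ?TG p hs)" .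
    let ?R = "\<bar>snd p\<bar> powr (\<alpha> - real k) * prod_list (map (prod_norm N) hs)"
    have R0: "?R \<ge> 0" by (intro mult_nonneg_nonneg powr_ge_zero prod_list_nonneg_map prod_norm_nonneg[OF N])
    have b1: "N (hderiv ?S k ?TF p hs) \<le> c1 * ?R" using C1 p l by (simp add: mult.assoc)
    have b2: "\<bar>hderiv ?S k ?TG p hs\<bar> \<le> c2 * ?R" using C2 p l by (simp add: mult.assoc)
    have "c1 * ?R \<le> (c1 + c2) * ?R" using R0 c2 by (intro mult_right_mono) auto
    moreover have "c2 * ?R \<le> (c1 + c2) * ?R" using R0 c1 by (intro mult_right_mono) auto
    ultimately have m: "max (N (hderiv ?S k ?TF p hs)) \<bar>hderiv ?S k ?TG p hs\<bar> \<le> (c1 + c2) * ?R"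
      using b1 b2 by (intro max.boundedI) linarith+
    have pn: "prod_norm N (hderiv (DDstar N) k (\<lambda>p. (F p, G p)) p hs) =
        max (N (hderiv ?S k ?TF p hs)) \<bar>hderiv ?S k ?TG p hs\<bar>"
      unfolding eq by (simp only: prod_norm_def fst_conv snd_conv)
    have "prod_norm N (hderiv (DDstar N) k (\<lambda>p. (F p, G p)) p hs) \<le> (c1 + c2) * ?R"
      unfolding pn by (rule m)
    then show "prod_norm N (hderiv (DDstar N) k (\<lambda>p. (F p, G p)) p hs)
       \<le> (c1 + c2) * \<bar>snd p\<bar> powr (\<alpha> - real k) * prod_list (map (prod_norm N) hs)"
      by (simp add: mult.assoc)
  qed
qed

theorem mainTheorem5:
  fixes N :: "'a::euclidean_space \<Rightarrow> real"
    and k :: nat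
    and F :: "'a \<times> real \<Rightarrow> 'a" and G :: "'a \<times> real \<Rightarrow> real"
    and V :: "('a \<times> real) set"
    and xp xm Bp Bm :: 'a and yp ym Ap Am \<alpha> K \<gamma> :: real
    and \<phi>p \<phi>m :: "'a \<times> real \<Rightarrow> 'a" and \<psi>p \<psi>m :: "'a \<times> real \<Rightarrow> real"
  assumes N: "is_norm N"
    and k: "k \<ge> 1"
    and maps: "\<forall>p\<in>DDstar N. (F p, G p) \<in> DD N"
    and V: "open V" "DD0 N \<subseteq> V"
    and A: "Ap \<noteq> 0" "Am \<noteq> 0"
    and \<alpha>: "\<alpha> > 0" and K: "K > 0" and \<gamma>: "\<gamma> > real k - 1"
    and Fp: "\<forall>(x, y)\<in>V \<inter> DDstar N. y > 0 \<longrightarrow>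
               F (x, y) = xp + \<bar>y\<bar> powr \<alpha> *\<^sub>R (Bp + \<phi>p (x, y))"
    and Fm: "\<forall>(x, y)\<in>V \<inter> DDstar N. y < 0 \<longrightarrow>
               F (x, y) = xm + \<bar>y\<bar> powr \<alpha> *\<^sub>R (Bm + \<phi>m (x, y))"
    and Gp: "\<forall>(x, y)\<in>V \<inter> DDstar N. y > 0 \<longrightarrow>
               G (x, y) = yp + \<bar>y\<bar> powr \<alpha> * (Ap + \<psi>p (x, y))"
    and Gm: "\<forall>(x, y)\<in>V \<inter> DDstar N. y < 0 \<longrightarrow>
               G (x, y) = ym + \<bar>y\<bar> powr \<alpha> * (Am + \<psi>m (x, y))"
    and smooth_p: "Ck_on (k + 1) \<phi>p (V \<inter> DDstar N \<inter> {p. snd p > 0})"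
                  "Ck_on (k + 1) \<psi>p (V \<inter> DDstar N \<inter> {p. snd p > 0})"
    and smooth_m: "Ck_on (k + 1) \<phi>m (V \<inter> DDstar N \<inter> {p. snd p < 0})"
                  "Ck_on (k + 1) \<psi>m (V \<inter> DDstar N \<inter> {p. snd p < 0})"
    and bound_\<phi>p: "\<forall>l m hs x y. l + m \<le> k + 1 \<longrightarrow> length hs = l \<longrightarrow>
        (x, y) \<in> V \<inter> DDstar N \<longrightarrow> y > 0 \<longrightarrow>
        N (hderiv (V \<inter> DDstar N \<inter> {p. snd p > 0}) (l + m) \<phi>p (x, y)
             (map (\<lambda>h. (h, 0)) hs @ replicate m (0, 1)))
          \<le> K * \<bar>y\<bar> powr (\<gamma> - real m) * prod_list (map N hs)"
    and bound_\<phi>m: "\<forall>l m hs x y. l + m \<le> k + 1 \<longrightarrow> length hs = l \<longrightarrow>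
        (x, y) \<in> V \<inter> DDstar N \<longrightarrow> y < 0 \<longrightarrow>
        N (hderiv (V \<inter> DDstar N \<inter> {p. snd p < 0}) (l + m) \<phi>m (x, y)
             (map (\<lambda>h. (h, 0)) hs @ replicate m (0, 1)))
          \<le> K * \<bar>y\<bar> powr (\<gamma> - real m) * prod_list (map N hs)"
    and bound_\<psi>p: "\<forall>l m hs x y. l + m \<le> k + 1 \<longrightarrow> length hs = l \<longrightarrow>
        (x, y) \<in> V \<inter> DDstar N \<longrightarrow> y > 0 \<longrightarrow>
        \<bar>hderiv (V \<inter> DDstar N \<inter> {p. snd p > 0}) (l + m) \<psi>p (x, y)
             (map (\<lambda>h. (h, 0)) hs @ replicate m (0, 1))\<bar>
          \<le> K * \<bar>y\<bar> powr (\<gamma> - real m) * prod_list (map N hs)"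
    and bound_\<psi>m: "\<forall>l m hs x y. l + m \<le> k + 1 \<longrightarrow> length hs = l \<longrightarrow>
        (x, y) \<in> V \<inter> DDstar N \<longrightarrow> y < 0 \<longrightarrow>
        \<bar>hderiv (V \<inter> DDstar N \<inter> {p. snd p < 0}) (l + m) \<psi>m (x, y)
             (map (\<lambda>h. (h, 0)) hs @ replicate m (0, 1))\<bar>
          \<le> K * \<bar>y\<bar> powr (\<gamma> - real m) * prod_list (map N hs)"
  shows "\<exists>U c. open U \<and> DD0 N \<subseteq> U \<and> c > 0 \<and>
           (\<forall>a b hs. (a, b) \<in> U \<inter> DDstar N \<longrightarrow> length hs = k \<longrightarrow>
              prod_norm N (hderiv (DDstar N) k (\<lambda>p. (F p, G p)) (a, b) hs)
                \<le> c * \<bar>b\<bar> powr (\<alpha> - real k) * prod_list (map (prod_norm N) hs))"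
proof -
  have \<gamma>0: "\<gamma> \<ge> 0" using \<gamma> k by simp
  have S1: "Sg N V 1 = V \<inter> DDstar N \<inter> {p. snd p > 0}" by (auto simp: Sg_def)
  have S2: "Sg N V (-1) = V \<inter> DDstar N \<inter> {p. snd p < 0}" by (auto simp: Sg_def)
  have mem1: "(x, y) \<in> Sg N V 1 \<longleftrightarrow> (x, y) \<in> V \<inter> DDstar N \<and> y > 0" for x y by (auto simp: S1)
  have mem2: "(x, y) \<in> Sg N V (-1) \<longleftrightarrow> (x, y) \<in> V \<inter> DDstar N \<and> y < 0" for x y by (auto simp: S2)
  have sm1: "smooth (k + 1) \<phi>p (Sg N V 1)" "smooth (k + 1) \<psi>p (Sg N V 1)"
    unfolding S1 using Ck_on_smooth smooth_p by blast+
  have sm2: "smooth (k + 1) \<phi>m (Sg N V (-1))" "smooth (k + 1) \<psi>m (Sg N V (-1))"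
    unfolding S2 using Ck_on_smooth smooth_m by blast+
  have HB1: "\<forall>l m hs x y. l + m \<le> k + 1 \<longrightarrow> length hs = l \<longrightarrow> (x, y) \<in> Sg N V 1 \<longrightarrow>
        N (hderiv (Sg N V 1) (l + m) \<phi>p (x, y) (map (\<lambda>h. (h, 0)) hs @ replicate m (0, 1)))
          \<le> K * \<bar>y\<bar> powr (\<gamma> - real m) * prod_list (map N hs)"
    unfolding mem1 unfolding S1 using bound_\<phi>p by blast
  have HB1': "\<forall>l m hs x y. l + m \<le> k + 1 \<longrightarrow> length hs = l \<longrightarrow> (x, y) \<in> Sg N V 1 \<longrightarrow>
        \<bar>hderiv (Sg N V 1) (l + m) \<psi>p (x, y) (map (\<lambda>h. (h, 0)) hs @ replicate m (0, 1))\<bar>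
          \<le> K * \<bar>y\<bar> powr (\<gamma> - real m) * prod_list (map N hs)"
    unfolding mem1 unfolding S1 using bound_\<psi>p by blast
  have HB2: "\<forall>l m hs x y. l + m \<le> k + 1 \<longrightarrow> length hs = l \<longrightarrow> (x, y) \<in> Sg N V (-1) \<longrightarrow>
        N (hderiv (Sg N V (-1)) (l + m) \<phi>m (x, y) (map (\<lambda>h. (h, 0)) hs @ replicate m (0, 1)))
          \<le> K * \<bar>y\<bar> powr (\<gamma> - real m) * prod_list (map N hs)"
    unfolding mem2 unfolding S2 using bound_\<phi>m by blast
  have HB2': "\<forall>l m hs x y. l + m \<le> k + 1 \<longrightarrow> length hs = l \<longrightarrow> (x, y) \<in> Sg N V (-1) \<longrightarrow>
        \<bar>hderiv (Sg N V (-1)) (l + m) \<psi>m (x, y) (map (\<lambda>h. (h, 0)) hs @ replicate m (0, 1))\<bar>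
          \<le> K * \<bar>y\<bar> powr (\<gamma> - real m) * prod_list (map N hs)"
    unfolding mem2 unfolding S2 using bound_\<psi>m by blast
  have FF1: "\<forall>q\<in>Sg N V 1. F q = xp + \<bar>snd q\<bar> powr \<alpha> *\<^sub>R (Bp + \<phi>p q)"
  proof
    fix q assume q: "q \<in> Sg N V 1"
    obtain x y where qxy: "q = (x, y)" by (cases q)
    show "F q = xp + \<bar>snd q\<bar> powr \<alpha> *\<^sub>R (Bp + \<phi>p q)" using Fp q qxy mem1 by auto
  qed
  have GG1: "\<forall>q\<in>Sg N V 1. G q = yp + \<bar>snd q\<bar> powr \<alpha> * (Ap + \<psi>p q)"
  proof
    fix q assume q: "q \<in> Sg N V 1"
    obtain x y where qxy: "q = (x, y)" by (cases q)
    show "G q = yp + \<bar>snd q\<bar> powr \<alpha> * (Ap + \<psi>p q)" using Gp q qxy mem1 by auto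
  qed
  have FF2: "\<forall>q\<in>Sg N V (-1). F q = xm + \<bar>snd q\<bar> powr \<alpha> *\<^sub>R (Bm + \<phi>m q)"
  proof
    fix q assume q: "q \<in> Sg N V (-1)"
    obtain x y where qxy: "q = (x, y)" by (cases q)
    show "F q = xm + \<bar>snd q\<bar> powr \<alpha> *\<^sub>R (Bm + \<phi>m q)" using Fm q qxy mem2 by auto
  qed
  have GG2: "\<forall>q\<in>Sg N V (-1). G q = ym + \<bar>snd q\<bar> powr \<alpha> * (Am + \<psi>m q)"
  proof
    fix q assume q: "q \<in> Sg N V (-1)"
    obtain x y where qxy: "q = (x, y)" by (cases q)
    show "G q = ym + \<bar>snd q\<bar> powr \<alpha> * (Am + \<psi>m q)" using Gm q qxy mem2 by auto
  qed
  obtain c1 where c1: "c1 > 0" and C1: "\<forall>p\<in>Sg N V 1. \<forall>hs. length hs = k \<longrightarrow>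
     prod_norm N (hderiv (DDstar N) k (\<lambda>p. (F p, G p)) p hs)
       \<le> c1 * \<bar>snd p\<bar> powr (\<alpha> - real k) * prod_list (map (prod_norm N) hs)"
    using sign_case[OF N V(1) _ k \<gamma>0 K sm1 HB1 HB1' FF1 GG1] by auto
  obtain c2 where c2: "c2 > 0" and C2: "\<forall>p\<in>Sg N V (-1). \<forall>hs. length hs = k \<longrightarrow>
     prod_norm N (hderiv (DDstar N) k (\<lambda>p. (F p, G p)) p hs)
       \<le> c2 * \<bar>snd p\<bar> powr (\<alpha> - real k) * prod_list (map (prod_norm N) hs)"
    using sign_case[OF N V(1) _ k \<gamma>0 K sm2 HB2 HB2' FF2 GG2] by auto
  show ?thesis
  proof (intro exI[of _ V] exI[of _ "c1 + c2"] conjI allI impI V)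
    show "c1 + c2 > 0" using c1 c2 by simp
    fix a b and hs :: "('a \<times> real) list"
    assume ab: "(a, b) \<in> V \<inter> DDstar N" and l: "length hs = k"
    have b0: "b \<noteq> 0" using ab by (auto simp: DDstar_def DD_def DD0_def)
    let ?R = "\<bar>b\<bar> powr (\<alpha> - real k) * prod_list (map (prod_norm N) hs)"
    have R0: "?R \<ge> 0" by (intro mult_nonneg_nonneg powr_ge_zero prod_list_nonneg_map prod_norm_nonneg[OF N])
    have "prod_norm N (hderiv (DDstar N) k (\<lambda>p. (F p, G p)) (a, b) hs) \<le> (c1 + c2) * ?R"
    proof (cases "b > 0")
      case True
      then have "(a, b) \<in> Sg N V 1" using ab mem1 by blast
      then have "prod_norm N (hderiv (DDstar N) k (\<lambda>p. (F p, G p)) (a, b) hs) \<le> c1 * ?R"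
        using C1[rule_format, of "(a, b)" hs] l by (simp add: mult.assoc)
      also have "\<dots> \<le> (c1 + c2) * ?R" using R0 c2 by (intro mult_right_mono) auto
      finally show ?thesis .
    next
      case False
      then have "b < 0" using b0 by simp
      then have "(a, b) \<in> Sg N V (-1)" using ab mem2 by blast
      then have "prod_norm N (hderiv (DDstar N) k (\<lambda>p. (F p, G p)) (a, b) hs) \<le> c2 * ?R"
        using C2[rule_format, of "(a, b)" hs] l by (simp add: mult.assoc)
      also have "\<dots> \<le> (c1 + c2) * ?R" using R0 c1 by (intro mult_right_mono) auto
      finally show ?thesis .
    qed
    then show "prod_norm N (hderiv (DDstar N) k (\<lambda>p. (F p, G p)) (a, b) hs)
       \<le> (c1 + c2) * \<bar>b\<bar> powr (\<alpha> - real k) * prod_list (map (prod_norm N) hs)"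
      by (simp add: mult.assoc)
  qed
qed

end
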